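(* Assume the Framework and the Purification Postulate. Let $\rho\in\mathfrak S(\mathrm A)$ and let $\{\mathcal A_i\}_{i\in X}$ be a test from $\mathrm A$ to $\mathrm A$. Then $\sum_{i\in X}\mathcal A_i\,\sigma=\sigma$ for all $\sigma\in D_\rho$ (the test is non-disturbing upon input of $\rho$) if and only if there are probabilities $p_i\ge 0$ such that $\mathcal A_i\,\sigma=p_i\,\sigma$ for all $\sigma\in D_\rho$ and all $i\in X$. In particular, if $\rho$ is internal, a test satisfies $\sum_i\mathcal A_i\sigma=\sigma$ for all states $\sigma$ of $\mathrm A$ iff $\mathcal A_i\sigma=p_i\sigma$ for all states $\sigma$ of $\mathrm A$ and all $i$.
   Context: Framework. We work in an operational-probabilistic theory: there is a collection of systems $\mathrm A,\mathrm B,\dots$, closed under a composition $\mathrm A\mathrm B$ (associative, symmetric up to a reversible swap, with a trivial system $\mathrm I$ satisfying $\mathrm A\mathrm I=\mathrm A$); for each pair of systems a set $\mathfrak T(\mathrm A,\mathrm B)$ of transformations; a test from $\mathrm A$ to $\mathrm B$ is a finite collection $\{\mathcal C_i\}_{i\in X}\subseteq\mathfrak T(\mathrm A,\mathrm B)$, and every transformation belongs to some test. Tests are closed under sequential composition, parallel composition ($\otimes$), coarse-graining (summing outcomes over the blocks of a partition of $X$) and conditioning (choosing the next test depending on the outcome of the previous one). States of $\mathrm A$ are the elements of $\mathfrak S(\mathrm A):=\mathfrak T(\mathrm I,\mathrm A)$, effects are the elements of $\mathfrak T(\mathrm A,\mathrm I)$, and transformations $\mathrm I\to\mathrm I$ are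 probabilities in $[0,1]$ (those of a test sum to $1$; composition is multiplication). An effect $a$ and a state $\rho$ give the probability $(a|\rho)$. States (effects) are identified when they give equal probabilities on all effects (states); transformations $\mathcal C,\mathcal C'$ are identified when $\mathcal C\otimes\mathcal I_{\mathrm S}$ and $\mathcal C'\otimes\mathcal I_{\mathrm S}$ act identically on all states of $\mathrm A\mathrm S$ for every system $\mathrm S$. States span a finite-dimensional real vector space $\mathfrak S_{\mathbb R}(\mathrm A)$, transformations act linearly, and $\mathfrak T_{\mathbb R}(\mathrm A,\mathrm B)$ is the real span of $\mathfrak T(\mathrm A,\mathrm B)$. Standing assumptions: (i) causality: each system $\mathrm A$ has a unique deterministic effect $e_{\mathrm A}$ (the effect forming a one-outcome observation test), and $e_{\mathrm A\mathrm B}=e_{\mathrm A}\otimes e_{\mathrm B}$; (ii) local discriminability: if two states of $\mathrm A\mathrm B$ differ, some product effect $a\otimes b$ gives them different probabilities; (iii) all sets of states are closed, the theory is not deterministic (hence all sets of states, effects and transformations are convex), and perfectly distinguishable states exist. A state $\rho$ is normalized if $(e|\rho)=1$; $\mathfrak S_1(\mathrm A)$ is the set of normalized states. A channel is a $\mathcal C\in\mathfrak T(\mathrm A,\mathrm B)$ with $e_{\mathrm B}\circ\mathcal C=e_{\mathrm A}$. A channel $\mathcal U\in\mathfrak T(\mathrm A,\mathrm B)$ is reversible if some channel $\mathcal W\in\mathfrak T(\mathrm B,\mathrm A)$ satisfies $\mathcal W\mathcal U=\mathcal I_{\mathrm A}$, $\mathcal U\mathcal W=\mathcal I_{\mathrm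 B}$; $\mathbf G_{\mathrm A}$ is the group of reversible channels on $\mathrm A$. The marginal of a state $\sigma$ of $\mathrm A\mathrm B$ on $\mathrm A$ is $(\mathcal I_{\mathrm A}\otimes e_{\mathrm B})\sigma$. Refinement. For $\mathcal C\in\mathfrak T(\mathrm A,\mathrm B)$, write $\mathcal D\prec\mathcal C$ if there are a test $\{\mathcal D_j\}_{j\in Y}$ and $Y_0\subseteq Y$ with $\mathcal C=\sum_{j\in Y_0}\mathcal D_j$ and $\mathcal D\in\{\mathcal D_j\}_{j\in Y_0}$; the refinement set is $D_{\mathcal C}=\{\mathcal D:\mathcal D\prec\mathcal C\}$. $\mathcal C$ is atomic if $\mathcal D\prec\mathcal C$ implies $\mathcal D=\lambda\mathcal C$ for some $\lambda\in[0,1]$. A pure state is an atomic state; a state is mixed otherwise. A state $\omega$ of $\mathrm A$ is internal if $\mathrm{Span}(D_\omega)=\mathfrak S_{\mathbb R}(\mathrm A)$. Purification Postulate. For every $\rho\in\mathfrak S_1(\mathrm A)$ there are a system $\mathrm B$ and a pure $\Psi\in\mathfrak S_1(\mathrm A\mathrm B)$ with $(\mathcal I_{\mathrm A}\otimes e_{\mathrm B})\Psi=\rho$ (a purification of $\rho$, with purifying system $\mathrm B$); and if $\Psi,\Psi'\in\mathfrak S_1(\mathrm A\mathrm B)$ are purifications of the same state, then $\Psi'=(\mathcal I_{\mathrm A}\otimes\mathcal U)\Psi$ for some $\mathcal U\in\mathbf G_{\mathrm B}$. *)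

theory Defs
  imports "HOL-Analysis.Analysis" "HOL-Library.Multiset"
begin

text \<open>
An operational-probabilistic theory (after identification of states, effects
and transformations).  Systems are elements of the type 's; all
(generalised) transformations live in one real normed vector space 't.
Tr A B is the set of transformations from A to B, Tests A B the set of tests
from A to B (a test is a finite nonempty list of transformations: list
positions are the outcomes, so repeated transformations are allowed; the order
is irrelevant by the permutation-closure axiom).  cmp D C is the sequential
composition "D after C", tens is the parallel composition, idt A the identity
of A, swp A B the swap from AB to BA.  Linear combinations of transformations
(coarse-graining sums, the spans T_R(A,B)) are taken in 't.
\<close>

record ('s, 't) opt =
  sc    :: "'s \<Rightarrow> 's \<Rightarrow> 's"
  Isys  :: 's
  Tr    :: "'s \<Rightarrow> 's \<Rightarrow> 't set"
  Tests :: "'s \<Rightarrow> 's \<Rightarrow> 't list set"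
  cmp   :: "'t \<Rightarrow> 't \<Rightarrow> 't"
  tens  :: "'t \<Rightarrow> 't \<Rightarrow> 't"
  idt   :: "'s \<Rightarrow> 't"
  swp   :: "'s \<Rightarrow> 's \<Rightarrow> 't"

definition St :: "('s, 't) opt \<Rightarrow> 's \<Rightarrow> 't set" where
  "St \<Theta> A = Tr \<Theta> (Isys \<Theta>) A"

definition Eff :: "('s, 't) opt \<Rightarrow> 's \<Rightarrow> 't set" where
  "Eff \<Theta> A = Tr \<Theta> A (Isys \<Theta>)"

definition pr :: "('s, 't::real_vector) opt \<Rightarrow> 't \<Rightarrow> 't \<Rightarrow> real" where
  "pr \<Theta> a \<rho> = (THE r. cmp \<Theta> a \<rho> = r *\<^sub>R idt \<Theta> (Isys \<Theta>))"

definition det_eff :: "('s, 't) opt \<Rightarrow> 's \<Rightarrow> 't" where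
  "det_eff \<Theta> A = (THE a. [a] \<in> Tests \<Theta> A (Isys \<Theta>))"

definition channel :: "('s, 't) opt \<Rightarrow> 's \<Rightarrow> 's \<Rightarrow> 't \<Rightarrow> bool" where
  "channel \<Theta> A B C \<longleftrightarrow> C \<in> Tr \<Theta> A B \<and> cmp \<Theta> (det_eff \<Theta> B) C = det_eff \<Theta> A"

definition reversible :: "('s, 't) opt \<Rightarrow> 's \<Rightarrow> 's \<Rightarrow> 't \<Rightarrow> bool" where
  "reversible \<Theta> A B U \<longleftrightarrow> channel \<Theta> A B U \<and>
     (\<exists>W. channel \<Theta> B A W \<and> cmp \<Theta> W U = idt \<Theta> A \<and> cmp \<Theta> U W = idt \<Theta> B)"

definition Grev :: "('s, 't) opt \<Rightarrow> 's \<Rightarrow> 't set" where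
  "Grev \<Theta> A = {U. reversible \<Theta> A A U}"

definition normalized :: "('s, 't::real_vector) opt \<Rightarrow> 's \<Rightarrow> 't \<Rightarrow> bool" where
  "normalized \<Theta> A \<rho> \<longleftrightarrow> \<rho> \<in> St \<Theta> A \<and> pr \<Theta> (det_eff \<Theta> A) \<rho> = 1"

definition marg :: "('s, 't) opt \<Rightarrow> 's \<Rightarrow> 's \<Rightarrow> 't \<Rightarrow> 't" where
  "marg \<Theta> A B \<sigma> = cmp \<Theta> (tens \<Theta> (idt \<Theta> A) (det_eff \<Theta> B)) \<sigma>"

definition refines :: "('s, 't::real_vector) opt \<Rightarrow> 's \<Rightarrow> 's \<Rightarrow> 't \<Rightarrow> 't \<Rightarrow> bool" where
  "refines \<Theta> A B D C \<longleftrightarrow>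
     (\<exists>T\<in>Tests \<Theta> A B. \<exists>Y0 \<subseteq> {..<length T}.
        C = (\<Sum>j\<in>Y0. T ! j) \<and> D \<in> (\<lambda>j. T ! j) ` Y0)"

definition refset :: "('s, 't::real_vector) opt \<Rightarrow> 's \<Rightarrow> 's \<Rightarrow> 't \<Rightarrow> 't set" where
  "refset \<Theta> A B C = {D. refines \<Theta> A B D C}"

definition atomic :: "('s, 't::real_vector) opt \<Rightarrow> 's \<Rightarrow> 's \<Rightarrow> 't \<Rightarrow> bool" where
  "atomic \<Theta> A B C \<longleftrightarrow> C \<in> Tr \<Theta> A B \<and>
     (\<forall>D. refines \<Theta> A B D C \<longrightarrow> (\<exists>l. 0 \<le> l \<and> l \<le> 1 \<and> D = l *\<^sub>R C))"

definition pure_state :: "('s, 't::real_vector) opt \<Rightarrow> 's \<Rightarrow> 't \<Rightarrow> bool" where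
  "pure_state \<Theta> A \<rho> \<longleftrightarrow> atomic \<Theta> (Isys \<Theta>) A \<rho>"

definition internal :: "('s, 't::real_vector) opt \<Rightarrow> 's \<Rightarrow> 't \<Rightarrow> bool" where
  "internal \<Theta> A \<omega> \<longleftrightarrow> \<omega> \<in> St \<Theta> A \<and>
     span (refset \<Theta> (Isys \<Theta>) A \<omega>) = span (St \<Theta> A)"

definition OPT :: "('s, 't::real_normed_vector) opt \<Rightarrow> bool" where
  "OPT \<Theta> \<longleftrightarrow>
   (let I = Isys \<Theta>; sc = sc \<Theta>; Tr = Tr \<Theta>; Tests = Tests \<Theta>; cmp = cmp \<Theta>;
        tens = tens \<Theta>; idt = idt \<Theta>; swp = swp \<Theta>; e = det_eff \<Theta>; pr = pr \<Theta> in
   \<comment> \<open>systems\<close>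
   (\<forall>A B C. sc (sc A B) C = sc A (sc B C)) \<and>
   (\<forall>A. sc A I = A \<and> sc I A = A) \<and>
   \<comment> \<open>sequential composition\<close>
   (\<forall>A. idt A \<in> Tr A A) \<and>
   (\<forall>A B C x y. x \<in> Tr A B \<longrightarrow> y \<in> Tr B C \<longrightarrow> cmp y x \<in> Tr A C) \<and>
   (\<forall>A B C D x y z. x \<in> Tr A B \<longrightarrow> y \<in> Tr B C \<longrightarrow> z \<in> Tr C D \<longrightarrow>
        cmp (cmp z y) x = cmp z (cmp y x)) \<and>
   (\<forall>A B x. x \<in> Tr A B \<longrightarrow> cmp x (idt A) = x \<and> cmp (idt B) x = x) \<and>
   \<comment> \<open>transformations act linearly\<close>
   bilinear cmp \<and> bilinear tens \<and>
   \<comment> \<open>parallel composition\<close>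
   (\<forall>A B A' B' x y. x \<in> Tr A B \<longrightarrow> y \<in> Tr A' B' \<longrightarrow> tens x y \<in> Tr (sc A A') (sc B B')) \<and>
   (\<forall>A B C A' B' C' x1 x2 y1 y2. x1 \<in> Tr A B \<longrightarrow> x2 \<in> Tr B C \<longrightarrow>
        y1 \<in> Tr A' B' \<longrightarrow> y2 \<in> Tr B' C' \<longrightarrow>
        tens (cmp x2 x1) (cmp y2 y1) = cmp (tens x2 y2) (tens x1 y1)) \<and>
   (\<forall>A B. tens (idt A) (idt B) = idt (sc A B)) \<and>
   (\<forall>A B A' B' A'' B'' x y z. x \<in> Tr A B \<longrightarrow> y \<in> Tr A' B' \<longrightarrow> z \<in> Tr A'' B'' \<longrightarrow>
        tens (tens x y) z = tens x (tens y z)) \<and>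
   (\<forall>A B x. x \<in> Tr A B \<longrightarrow> tens x (idt I) = x \<and> tens (idt I) x = x) \<and>
   \<comment> \<open>symmetry: reversible swap, natural, coherent\<close>
   (\<forall>A B. swp A B \<in> Tr (sc A B) (sc B A) \<and> [swp A B] \<in> Tests (sc A B) (sc B A) \<and>
          cmp (swp B A) (swp A B) = idt (sc A B)) \<and>
   (\<forall>A. swp A I = idt A) \<and>
   (\<forall>A A' B B' x y. x \<in> Tr A A' \<longrightarrow> y \<in> Tr B B' \<longrightarrow>
        cmp (swp A' B') (tens x y) = cmp (tens y x) (swp A B)) \<and>
   (\<forall>A B C. swp (sc A B) C = cmp (tens (swp A C) (idt B)) (tens (idt A) (swp B C))) \<and>
   \<comment> \<open>tests\<close>
   (\<forall>A B T. T \<in> Tests A B \<longrightarrow> T \<noteq> [] \<and> set T \<subseteq> Tr A B) \<and>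
   (\<forall>A B x. x \<in> Tr A B \<longrightarrow> (\<exists>T\<in>Tests A B. x \<in> set T)) \<and>
   (\<forall>A. [idt A] \<in> Tests A A) \<and>
   (\<forall>A B T T'. T \<in> Tests A B \<longrightarrow> mset T' = mset T \<longrightarrow> T' \<in> Tests A B) \<and>
   (\<forall>A B C T1 T2. T1 \<in> Tests A B \<longrightarrow> T2 \<in> Tests B C \<longrightarrow>
        concat (map (\<lambda>x. map (\<lambda>y. cmp y x) T2) T1) \<in> Tests A C) \<and>
   (\<forall>A B A' B' T1 T2. T1 \<in> Tests A B \<longrightarrow> T2 \<in> Tests A' B' \<longrightarrow>
        concat (map (\<lambda>x. map (\<lambda>y. tens x y) T2) T1) \<in> Tests (sc A A') (sc B B')) \<and>
   (\<forall>A B T (f::nat \<Rightarrow> nat) m. T \<in> Tests A B \<longrightarrow> f ` {..<length T} = {..<m} \<longrightarrow>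
        map (\<lambda>j. \<Sum>i\<in>{i. i < length T \<and> f i = j}. T ! i) [0..<m] \<in> Tests A B) \<and>
   (\<forall>A B C T S. T \<in> Tests A B \<longrightarrow> (\<forall>i<length T. S i \<in> Tests B C) \<longrightarrow>
        concat (map (\<lambda>i. map (\<lambda>y. cmp y (T ! i)) (S i)) [0..<length T]) \<in> Tests A C) \<and>
   \<comment> \<open>probabilities\<close>
   idt I \<noteq> 0 \<and>
   Tr I I = {r *\<^sub>R idt I | r. 0 \<le> r \<and> r \<le> 1} \<and>
   (\<forall>T. T \<in> Tests I I \<longrightarrow> sum_list T = idt I) \<and>
   (\<forall>p::real. 0 \<le> p \<longrightarrow> p \<le> 1 \<longrightarrow> [p *\<^sub>R idt I, (1 - p) *\<^sub>R idt I] \<in> Tests I I) \<and>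
   \<comment> \<open>identification (operational equivalence)\<close>
   (\<forall>A \<rho> \<rho>'. \<rho> \<in> Tr I A \<longrightarrow> \<rho>' \<in> Tr I A \<longrightarrow>
        (\<forall>a\<in>Tr A I. pr a \<rho> = pr a \<rho>') \<longrightarrow> \<rho> = \<rho>') \<and>
   (\<forall>A a a'. a \<in> Tr A I \<longrightarrow> a' \<in> Tr A I \<longrightarrow>
        (\<forall>\<rho>\<in>Tr I A. pr a \<rho> = pr a' \<rho>) \<longrightarrow> a = a') \<and>
   (\<forall>A B C C'. C \<in> Tr A B \<longrightarrow> C' \<in> Tr A B \<longrightarrow>
        (\<forall>S. \<forall>\<rho>\<in>Tr I (sc A S). cmp (tens C (idt S)) \<rho> = cmp (tens C' (idt S)) \<rho>) \<longrightarrow> C = C') \<and>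
   \<comment> \<open>finite dimensionality of the state spaces\<close>
   (\<forall>A. \<exists>F. finite F \<and> Tr I A \<subseteq> span F) \<and>
   \<comment> \<open>(i) causality\<close>
   (\<forall>A. \<exists>!a. [a] \<in> Tests A I) \<and>
   (\<forall>A B. e (sc A B) = tens (e A) (e B)) \<and>
   \<comment> \<open>(ii) local discriminability\<close>
   (\<forall>A B \<rho> \<rho>'. \<rho> \<in> Tr I (sc A B) \<longrightarrow> \<rho>' \<in> Tr I (sc A B) \<longrightarrow> \<rho> \<noteq> \<rho>' \<longrightarrow>
        (\<exists>a\<in>Tr A I. \<exists>b\<in>Tr B I. pr (tens a b) \<rho> \<noteq> pr (tens a b) \<rho>')) \<and>
   \<comment> \<open>(iii) closed state sets, convexity, perfectly distinguishable states\<close>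
   (\<forall>A. closed (Tr I A)) \<and>
   (\<forall>A B. convex (Tr A B)) \<and>
   (\<exists>A \<rho>1 \<rho>2 a1 a2. \<rho>1 \<in> Tr I A \<and> \<rho>2 \<in> Tr I A \<and> [a1, a2] \<in> Tests A I \<and>
        pr a1 \<rho>1 = 1 \<and> pr a2 \<rho>2 = 1 \<and> pr a1 \<rho>2 = 0 \<and> pr a2 \<rho>1 = 0))"

definition purification :: "('s, 't::real_normed_vector) opt \<Rightarrow> bool" where
  "purification \<Theta> \<longleftrightarrow>
   (\<forall>A \<rho>. normalized \<Theta> A \<rho> \<longrightarrow>
      (\<exists>B \<Psi>. normalized \<Theta> (sc \<Theta> A B) \<Psi> \<and> pure_state \<Theta> (sc \<Theta> A B) \<Psi> \<and>
              marg \<Theta> A B \<Psi> = \<rho>)) \<and>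
   (\<forall>A B \<Psi> \<Psi>'. normalized \<Theta> (sc \<Theta> A B) \<Psi> \<longrightarrow> normalized \<Theta> (sc \<Theta> A B) \<Psi>' \<longrightarrow>
      pure_state \<Theta> (sc \<Theta> A B) \<Psi> \<longrightarrow> pure_state \<Theta> (sc \<Theta> A B) \<Psi>' \<longrightarrow>
      marg \<Theta> A B \<Psi> = marg \<Theta> A B \<Psi>' \<longrightarrow>
      (\<exists>U\<in>Grev \<Theta> B. \<Psi>' = cmp \<Theta> (tens \<Theta> (idt \<Theta> A) U) \<Psi>))"

end

theory Submission
  imports Defs
begin

locale opt_ctx =
  fixes \<Theta> :: "('s, 't::real_normed_vector) opt"
  assumes OPT: "OPT \<Theta>"
begin

lemmas OPT' = OPT[unfolded OPT_def Let_def]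

abbreviation "II \<equiv> Isys \<Theta>"
abbreviation "scc \<equiv> sc \<Theta>"
abbreviation "TR \<equiv> Tr \<Theta>"
abbreviation "TS \<equiv> Tests \<Theta>"
abbreviation "cp \<equiv> cmp \<Theta>"
abbreviation "tn \<equiv> tens \<Theta>"
abbreviation "idd \<equiv> idt \<Theta>"
abbreviation "ee \<equiv> det_eff \<Theta>"
abbreviation "pp \<equiv> pr \<Theta>"


lemma sc_assoc: "scc (scc A B) C = scc A (scc B C)" using OPT'[THEN conjunct1] by blast+
lemma sc_I[simp]: "scc A II = A" "scc II A = A" using OPT'[THEN conjunct2, THEN conjunct1] by blast+
lemma idt_Tr[simp]: "idd A \<in> TR A A" using OPT'[THEN conjunct2, THEN conjunct2, THEN conjunct1] by blast+
lemma cmp_Tr: "x \<in> TR A B \<Longrightarrow> y \<in> TR B C \<Longrightarrow> cp y x \<in> TR A C" using OPT'[THEN conjunct2, THEN conjunct2, THEN conjunct2, THEN conjunct1] by blast+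
lemma cmp_assoc: "x \<in> TR A B \<Longrightarrow> y \<in> TR B C \<Longrightarrow> z \<in> TR C D \<Longrightarrow> cp (cp z y) x = cp z (cp y x)"
  using OPT'[THEN conjunct2, THEN conjunct2, THEN conjunct2, THEN conjunct2, THEN conjunct1] by blast+
lemma cmp_id: "x \<in> TR A B \<Longrightarrow> cp x (idd A) = x" "x \<in> TR A B \<Longrightarrow> cp (idd B) x = x"
  using OPT'[THEN conjunct2, THEN conjunct2, THEN conjunct2, THEN conjunct2, THEN conjunct2, THEN conjunct1] by blast+
lemma bil_cmp: "bilinear cp" using OPT'[THEN conjunct2, THEN conjunct2, THEN conjunct2, THEN conjunct2, THEN conjunct2, THEN conjunct2, THEN conjunct1] by blast+
lemma bil_tens: "bilinear tn" using OPT'[THEN conjunct2, THEN conjunct2, THEN conjunct2, THEN conjunct2, THEN conjunct2, THEN conjunct2, THEN conjunct2, THEN conjunct1] by blast+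
lemma tens_Tr: "x \<in> TR A B \<Longrightarrow> y \<in> TR A' B' \<Longrightarrow> tn x y \<in> TR (scc A A') (scc B B')" using OPT'[THEN conjunct2, THEN conjunct2, THEN conjunct2, THEN conjunct2, THEN conjunct2, THEN conjunct2, THEN conjunct2, THEN conjunct2, THEN conjunct1] by blast+
lemma interchange: "x1 \<in> TR A B \<Longrightarrow> x2 \<in> TR B C \<Longrightarrow> y1 \<in> TR A' B' \<Longrightarrow> y2 \<in> TR B' C' \<Longrightarrow>
        tn (cp x2 x1) (cp y2 y1) = cp (tn x2 y2) (tn x1 y1)" using OPT'[THEN conjunct2, THEN conjunct2, THEN conjunct2, THEN conjunct2, THEN conjunct2, THEN conjunct2, THEN conjunct2, THEN conjunct2, THEN conjunct2, THEN conjunct1] by blast+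
lemma tens_idt: "tn (idd A) (idd B) = idd (scc A B)" using OPT'[THEN conjunct2, THEN conjunct2, THEN conjunct2, THEN conjunct2, THEN conjunct2, THEN conjunct2, THEN conjunct2, THEN conjunct2, THEN conjunct2, THEN conjunct2, THEN conjunct1] by blast+
lemma tens_assoc: "x \<in> TR A B \<Longrightarrow> y \<in> TR A' B' \<Longrightarrow> z \<in> TR A'' B'' \<Longrightarrow>
        tn (tn x y) z = tn x (tn y z)" using OPT'[THEN conjunct2, THEN conjunct2, THEN conjunct2, THEN conjunct2, THEN conjunct2, THEN conjunct2, THEN conjunct2, THEN conjunct2, THEN conjunct2, THEN conjunct2, THEN conjunct2, THEN conjunct1] by blast+
lemma tens_unit: "x \<in> TR A B \<Longrightarrow> tn x (idd II) = x" "x \<in> TR A B \<Longrightarrow> tn (idd II) x = x" using OPT'[THEN conjunct2, THEN conjunct2, THEN conjunct2, THEN conjunct2, THEN conjunct2, THEN conjunct2, THEN conjunct2, THEN conjunct2, THEN conjunct2, THEN conjunct2, THEN conjunct2, THEN conjunct2, THEN conjunct1] by blast+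
lemma tests_Tr: "T \<in> TS A B \<Longrightarrow> T \<noteq> [] \<and> set T \<subseteq> TR A B" using OPT'[THEN conjunct2, THEN conjunct2, THEN conjunct2, THEN conjunct2, THEN conjunct2, THEN conjunct2, THEN conjunct2, THEN conjunct2, THEN conjunct2, THEN conjunct2, THEN conjunct2, THEN conjunct2, THEN conjunct2, THEN conjunct2, THEN conjunct2, THEN conjunct2, THEN conjunct2, THEN conjunct1] by blast+
lemma Tr_test: "x \<in> TR A B \<Longrightarrow> \<exists>T\<in>TS A B. x \<in> set T" using OPT'[THEN conjunct2, THEN conjunct2, THEN conjunct2, THEN conjunct2, THEN conjunct2, THEN conjunct2, THEN conjunct2, THEN conjunct2, THEN conjunct2, THEN conjunct2, THEN conjunct2, THEN conjunct2, THEN conjunct2, THEN conjunct2, THEN conjunct2, THEN conjunct2, THEN conjunct2, THEN conjunct2, THEN conjunct1] by blast+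
lemma id_test: "[idd A] \<in> TS A A" using OPT'[THEN conjunct2, THEN conjunct2, THEN conjunct2, THEN conjunct2, THEN conjunct2, THEN conjunct2, THEN conjunct2, THEN conjunct2, THEN conjunct2, THEN conjunct2, THEN conjunct2, THEN conjunct2, THEN conjunct2, THEN conjunct2, THEN conjunct2, THEN conjunct2, THEN conjunct2, THEN conjunct2, THEN conjunct2, THEN conjunct1] by blast+
lemma perm_test: "T \<in> TS A B \<Longrightarrow> mset T' = mset T \<Longrightarrow> T' \<in> TS A B" using OPT'[THEN conjunct2, THEN conjunct2, THEN conjunct2, THEN conjunct2, THEN conjunct2, THEN conjunct2, THEN conjunct2, THEN conjunct2, THEN conjunct2, THEN conjunct2, THEN conjunct2, THEN conjunct2, THEN conjunct2, THEN conjunct2, THEN conjunct2, THEN conjunct2, THEN conjunct2, THEN conjunct2, THEN conjunct2, THEN conjunct2, THEN conjunct1] by blast+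
lemma seq_test: "T1 \<in> TS A B \<Longrightarrow> T2 \<in> TS B C \<Longrightarrow> concat (map (\<lambda>x. map (\<lambda>y. cp y x) T2) T1) \<in> TS A C"
  using OPT'[THEN conjunct2, THEN conjunct2, THEN conjunct2, THEN conjunct2, THEN conjunct2, THEN conjunct2, THEN conjunct2, THEN conjunct2, THEN conjunct2, THEN conjunct2, THEN conjunct2, THEN conjunct2, THEN conjunct2, THEN conjunct2, THEN conjunct2, THEN conjunct2, THEN conjunct2, THEN conjunct2, THEN conjunct2, THEN conjunct2, THEN conjunct2, THEN conjunct1] by blast+
lemma par_test: "T1 \<in> TS A B \<Longrightarrow> T2 \<in> TS A' B' \<Longrightarrow>
        concat (map (\<lambda>x. map (\<lambda>y. tn x y) T2) T1) \<in> TS (scc A A') (scc B B')" using OPT'[THEN conjunct2, THEN conjunct2, THEN conjunct2, THEN conjunct2, THEN conjunct2, THEN conjunct2, THEN conjunct2, THEN conjunct2, THEN conjunct2, THEN conjunct2, THEN conjunct2, THEN conjunct2, THEN conjunct2, THEN conjunct2, THEN conjunct2, THEN conjunct2, THEN conjunct2, THEN conjunct2, THEN conjunct2, THEN conjunct2, THEN conjunct2, THEN conjunct2, THEN conjunct1] by blast+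
lemma cg_test: "T \<in> TS A B \<Longrightarrow> (f::nat\<Rightarrow>nat) ` {..<length T} = {..<m} \<Longrightarrow>
        map (\<lambda>j. \<Sum>i\<in>{i. i < length T \<and> f i = j}. T ! i) [0..<m] \<in> TS A B" using OPT'[THEN conjunct2, THEN conjunct2, THEN conjunct2, THEN conjunct2, THEN conjunct2, THEN conjunct2, THEN conjunct2, THEN conjunct2, THEN conjunct2, THEN conjunct2, THEN conjunct2, THEN conjunct2, THEN conjunct2, THEN conjunct2, THEN conjunct2, THEN conjunct2, THEN conjunct2, THEN conjunct2, THEN conjunct2, THEN conjunct2, THEN conjunct2, THEN conjunct2, THEN conjunct2, THEN conjunct1] by blast+
lemma cond_test: "T \<in> TS A B \<Longrightarrow> (\<forall>i<length T. S i \<in> TS B C) \<Longrightarrow>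
        concat (map (\<lambda>i. map (\<lambda>y. cp y (T ! i)) (S i)) [0..<length T]) \<in> TS A C" using OPT'[THEN conjunct2, THEN conjunct2, THEN conjunct2, THEN conjunct2, THEN conjunct2, THEN conjunct2, THEN conjunct2, THEN conjunct2, THEN conjunct2, THEN conjunct2, THEN conjunct2, THEN conjunct2, THEN conjunct2, THEN conjunct2, THEN conjunct2, THEN conjunct2, THEN conjunct2, THEN conjunct2, THEN conjunct2, THEN conjunct2, THEN conjunct2, THEN conjunct2, THEN conjunct2, THEN conjunct2, THEN conjunct1] by blast+
lemma idtI_nz: "idd II \<noteq> 0" using OPT'[THEN conjunct2, THEN conjunct2, THEN conjunct2, THEN conjunct2, THEN conjunct2, THEN conjunct2, THEN conjunct2, THEN conjunct2, THEN conjunct2, THEN conjunct2, THEN conjunct2, THEN conjunct2, THEN conjunct2, THEN conjunct2, THEN conjunct2, THEN conjunct2, THEN conjunct2, THEN conjunct2, THEN conjunct2, THEN conjunct2, THEN conjunct2, THEN conjunct2, THEN conjunct2, THEN conjunct2, THEN conjunct2, THEN conjunct1] by blast+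
lemma TrII: "TR II II = {r *\<^sub>R idd II | r. 0 \<le> r \<and> r \<le> 1}" using OPT'[THEN conjunct2, THEN conjunct2, THEN conjunct2, THEN conjunct2, THEN conjunct2, THEN conjunct2, THEN conjunct2, THEN conjunct2, THEN conjunct2, THEN conjunct2, THEN conjunct2, THEN conjunct2, THEN conjunct2, THEN conjunct2, THEN conjunct2, THEN conjunct2, THEN conjunct2, THEN conjunct2, THEN conjunct2, THEN conjunct2, THEN conjunct2, THEN conjunct2, THEN conjunct2, THEN conjunct2, THEN conjunct2, THEN conjunct2, THEN conjunct1] by blast+
lemma testII_sum: "T \<in> TS II II \<Longrightarrow> sum_list T = idd II" using OPT'[THEN conjunct2, THEN conjunct2, THEN conjunct2, THEN conjunct2, THEN conjunct2, THEN conjunct2, THEN conjunct2, THEN conjunct2, THEN conjunct2, THEN conjunct2, THEN conjunct2, THEN conjunct2, THEN conjunct2, THEN conjunct2, THEN conjunct2, THEN conjunct2, THEN conjunct2, THEN conjunct2, THEN conjunct2, THEN conjunct2, THEN conjunct2, THEN conjunct2, THEN conjunct2, THEN conjunct2, THEN conjunct2, THEN conjunct2, THEN conjunct2, THEN conjunct1] by blast+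
lemma coin_test: "0 \<le> p \<Longrightarrow> p \<le> 1 \<Longrightarrow> [p *\<^sub>R idd II, (1 - p) *\<^sub>R idd II] \<in> TS II II" using OPT'[THEN conjunct2, THEN conjunct2, THEN conjunct2, THEN conjunct2, THEN conjunct2, THEN conjunct2, THEN conjunct2, THEN conjunct2, THEN conjunct2, THEN conjunct2, THEN conjunct2, THEN conjunct2, THEN conjunct2, THEN conjunct2, THEN conjunct2, THEN conjunct2, THEN conjunct2, THEN conjunct2, THEN conjunct2, THEN conjunct2, THEN conjunct2, THEN conjunct2, THEN conjunct2, THEN conjunct2, THEN conjunct2, THEN conjunct2, THEN conjunct2, THEN conjunct2, THEN conjunct1] by blast+
lemma ident_state: "\<rho> \<in> TR II A \<Longrightarrow> \<rho>' \<in> TR II A \<Longrightarrow> (\<forall>a\<in>TR A II. pp a \<rho> = pp a \<rho>') \<Longrightarrow> \<rho> = \<rho>'"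
  using OPT'[THEN conjunct2, THEN conjunct2, THEN conjunct2, THEN conjunct2, THEN conjunct2, THEN conjunct2, THEN conjunct2, THEN conjunct2, THEN conjunct2, THEN conjunct2, THEN conjunct2, THEN conjunct2, THEN conjunct2, THEN conjunct2, THEN conjunct2, THEN conjunct2, THEN conjunct2, THEN conjunct2, THEN conjunct2, THEN conjunct2, THEN conjunct2, THEN conjunct2, THEN conjunct2, THEN conjunct2, THEN conjunct2, THEN conjunct2, THEN conjunct2, THEN conjunct2, THEN conjunct2, THEN conjunct1] by blast+
lemma causal1: "\<exists>!a. [a] \<in> TS A II" using OPT'[THEN conjunct2, THEN conjunct2, THEN conjunct2, THEN conjunct2, THEN conjunct2, THEN conjunct2, THEN conjunct2, THEN conjunct2, THEN conjunct2, THEN conjunct2, THEN conjunct2, THEN conjunct2, THEN conjunct2, THEN conjunct2, THEN conjunct2, THEN conjunct2, THEN conjunct2, THEN conjunct2, THEN conjunct2, THEN conjunct2, THEN conjunct2, THEN conjunct2, THEN conjunct2, THEN conjunct2, THEN conjunct2, THEN conjunct2, THEN conjunct2, THEN conjunct2, THEN conjunct2, THEN conjunct2, THEN conjunct2, THEN conjunct2, THEN conjunct2, THEN conjunct1] by blast+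
lemma causal2: "ee (scc A B) = tn (ee A) (ee B)" using OPT'[THEN conjunct2, THEN conjunct2, THEN conjunct2, THEN conjunct2, THEN conjunct2, THEN conjunct2, THEN conjunct2, THEN conjunct2, THEN conjunct2, THEN conjunct2, THEN conjunct2, THEN conjunct2, THEN conjunct2, THEN conjunct2, THEN conjunct2, THEN conjunct2, THEN conjunct2, THEN conjunct2, THEN conjunct2, THEN conjunct2, THEN conjunct2, THEN conjunct2, THEN conjunct2, THEN conjunct2, THEN conjunct2, THEN conjunct2, THEN conjunct2, THEN conjunct2, THEN conjunct2, THEN conjunct2, THEN conjunct2, THEN conjunct2, THEN conjunct2, THEN conjunct2, THEN conjunct1] by blast+
lemma locdisc: "\<rho> \<in> TR II (scc A B) \<Longrightarrow> \<rho>' \<in> TR II (scc A B) \<Longrightarrow>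
   (\<forall>a\<in>TR A II. \<forall>b\<in>TR B II. pp (tn a b) \<rho> = pp (tn a b) \<rho>') \<Longrightarrow> \<rho> = \<rho>'" using OPT'[THEN conjunct2, THEN conjunct2, THEN conjunct2, THEN conjunct2, THEN conjunct2, THEN conjunct2, THEN conjunct2, THEN conjunct2, THEN conjunct2, THEN conjunct2, THEN conjunct2, THEN conjunct2, THEN conjunct2, THEN conjunct2, THEN conjunct2, THEN conjunct2, THEN conjunct2, THEN conjunct2, THEN conjunct2, THEN conjunct2, THEN conjunct2, THEN conjunct2, THEN conjunct2, THEN conjunct2, THEN conjunct2, THEN conjunct2, THEN conjunct2, THEN conjunct2, THEN conjunct2, THEN conjunct2, THEN conjunct2, THEN conjunct2, THEN conjunct2, THEN conjunct2, THEN conjunct2, THEN conjunct1] by blast+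
lemma closed_St: "closed (TR II A)" using OPT'[THEN conjunct2, THEN conjunct2, THEN conjunct2, THEN conjunct2, THEN conjunct2, THEN conjunct2, THEN conjunct2, THEN conjunct2, THEN conjunct2, THEN conjunct2, THEN conjunct2, THEN conjunct2, THEN conjunct2, THEN conjunct2, THEN conjunct2, THEN conjunct2, THEN conjunct2, THEN conjunct2, THEN conjunct2, THEN conjunct2, THEN conjunct2, THEN conjunct2, THEN conjunct2, THEN conjunct2, THEN conjunct2, THEN conjunct2, THEN conjunct2, THEN conjunct2, THEN conjunct2, THEN conjunct2, THEN conjunct2, THEN conjunct2, THEN conjunct2, THEN conjunct2, THEN conjunct2, THEN conjunct2, THEN conjunct1] by blast+
lemma distinguishable: "\<exists>A \<rho>1 \<rho>2 a1 a2. \<rho>1 \<in> TR II A \<and> \<rho>2 \<in> TR II A \<and> [a1, a2] \<in> TS A II \<and>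
        pp a1 \<rho>1 = 1 \<and> pp a2 \<rho>2 = 1 \<and> pp a1 \<rho>2 = 0 \<and> pp a2 \<rho>1 = 0" using OPT'[THEN conjunct2, THEN conjunct2, THEN conjunct2, THEN conjunct2, THEN conjunct2, THEN conjunct2, THEN conjunct2, THEN conjunct2, THEN conjunct2, THEN conjunct2, THEN conjunct2, THEN conjunct2, THEN conjunct2, THEN conjunct2, THEN conjunct2, THEN conjunct2, THEN conjunct2, THEN conjunct2, THEN conjunct2, THEN conjunct2, THEN conjunct2, THEN conjunct2, THEN conjunct2, THEN conjunct2, THEN conjunct2, THEN conjunct2, THEN conjunct2, THEN conjunct2, THEN conjunct2, THEN conjunct2, THEN conjunct2, THEN conjunct2, THEN conjunct2, THEN conjunct2, THEN conjunct2, THEN conjunct2, THEN conjunct2, THEN conjunct2] by blast+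


lemma lin_cp_r: "linear (cp x)" using bil_cmp unfolding bilinear_def by blast
lemma lin_cp_l: "linear (\<lambda>x. cp x y)" using bil_cmp unfolding bilinear_def by blast
lemma lin_tn_r: "linear (tn x)" using bil_tens unfolding bilinear_def by blast
lemma lin_tn_l: "linear (\<lambda>x. tn x y)" using bil_tens unfolding bilinear_def by blast

lemma cp_add_r: "cp x (y + z) = cp x y + cp x z" using linear_add[OF lin_cp_r] .
lemma cp_add_l: "cp (x + y) z = cp x z + cp y z" using linear_add[OF lin_cp_l] .
lemma cp_scale_r: "cp x (r *\<^sub>R y) = r *\<^sub>R cp x y" using linear_cmul[OF lin_cp_r] .
lemma cp_scale_l: "cp (r *\<^sub>R x) y = r *\<^sub>R cp x y" using linear_cmul[OF lin_cp_l] .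
lemma cp_sum_r: "cp x (sum f S) = (\<Sum>i\<in>S. cp x (f i))" using linear_sum[OF lin_cp_r] .
lemma cp_sum_l: "cp (sum f S) y = (\<Sum>i\<in>S. cp (f i) y)" using linear_sum[OF lin_cp_l] .
lemma cp_zero_r: "cp x 0 = 0" using linear_0[OF lin_cp_r] .
lemma cp_zero_l: "cp 0 y = 0" using linear_0[OF lin_cp_l] .
lemma tn_add_r: "tn x (y + z) = tn x y + tn x z" using linear_add[OF lin_tn_r] .
lemma tn_add_l: "tn (x + y) z = tn x z + tn y z" using linear_add[OF lin_tn_l] .
lemma tn_scale_r: "tn x (r *\<^sub>R y) = r *\<^sub>R tn x y" using linear_cmul[OF lin_tn_r] .
lemma tn_scale_l: "tn (r *\<^sub>R x) y = r *\<^sub>R tn x y" using linear_cmul[OF lin_tn_l] .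
lemma tn_sum_r: "tn x (sum f S) = (\<Sum>i\<in>S. tn x (f i))" using linear_sum[OF lin_tn_r] .
lemma tn_sum_l: "tn (sum f S) y = (\<Sum>i\<in>S. tn (f i) y)" using linear_sum[OF lin_tn_l] .

lemma cp_sum_list_l: "cp (sum_list xs) y = sum_list (map (\<lambda>x. cp x y) xs)"
  by (induction xs) (auto simp: cp_add_l cp_zero_l)
lemma cp_sum_list_r: "cp y (sum_list xs) = sum_list (map (\<lambda>x. cp y x) xs)"
  by (induction xs) (auto simp: cp_add_r cp_zero_r)
lemma tn_sum_list_l: "tn (sum_list xs) y = sum_list (map (\<lambda>x. tn x y) xs)"
  by (induction xs) (auto simp: tn_add_l linear_0[OF lin_tn_l])
lemma tn_sum_list_r: "tn y (sum_list xs) = sum_list (map (\<lambda>x. tn y x) xs)"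
  by (induction xs) (auto simp: tn_add_r linear_0[OF lin_tn_r])
lemma cp_sum_mset_l: "cp (sum_mset M) y = sum_mset (image_mset (\<lambda>x. cp x y) M)"
  by (induction M) (auto simp: cp_add_l cp_zero_l)
lemma cp_sum_mset_r: "cp y (sum_mset M) = sum_mset (image_mset (\<lambda>x. cp y x) M)"
  by (induction M) (auto simp: cp_add_r cp_zero_r)

lemma det_eff_test: "[ee A] \<in> TS A II"
proof -
  have "\<exists>!a. [a] \<in> TS A II" by (rule causal1)
  then show ?thesis unfolding det_eff_def by (rule theI')
qed
lemma det_eff_unique: "[a] \<in> TS A II \<Longrightarrow> a = ee A"
  using causal1[of A] det_eff_test[of A] by blast
lemma det_eff_Tr[simp]: "ee A \<in> TR A II"
  using tests_Tr[OF det_eff_test[of A]] by simp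

lemma sum_test: assumes "T \<in> TS A B" shows "[sum_list T] \<in> TS A B"
proof -
  have ne: "T \<noteq> []" using tests_Tr[OF assms] by blast
  have img: "(\<lambda>i. 0::nat) ` {..<length T} = {..<1}" using ne by auto
  have "map (\<lambda>j. \<Sum>i\<in>{i. i < length T \<and> (0::nat) = j}. T ! i) [0..<1] \<in> TS A B"
    using cg_test[OF assms img] by simp
  moreover have "map (\<lambda>j. \<Sum>i\<in>{i. i < length T \<and> (0::nat) = j}. T ! i) [0..<1] = [sum_list T]"
    by (simp add: sum_list_sum_nth atLeast0LessThan lessThan_def)
  ultimately show ?thesis by simp
qed
lemma sum_Tr: "T \<in> TS A B \<Longrightarrow> sum_list T \<in> TR A B"
  using tests_Tr[OF sum_test] by auto
lemma sum_eff: "T \<in> TS A II \<Longrightarrow> sum_list T = ee A"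
  using det_eff_unique sum_test by blast

lemma scal_inj: "r *\<^sub>R idd II = s *\<^sub>R idd II \<Longrightarrow> r = s"
  using idtI_nz by (simp add: scaleR_cancel_right)

lemma pr_of: "cp a \<rho> = r *\<^sub>R idd II \<Longrightarrow> pp a \<rho> = r"
  unfolding pr_def by (rule the_equality) (auto dest: scal_inj simp: idtI_nz)

lemma pr_eq: assumes "a \<in> TR A II" "\<rho> \<in> TR II A"
  shows "cp a \<rho> = pp a \<rho> *\<^sub>R idd II" "0 \<le> pp a \<rho>" "pp a \<rho> \<le> 1"
proof -
  have "cp a \<rho> \<in> TR II II" using cmp_Tr[OF assms(2,1)] .
  then obtain r where r: "cp a \<rho> = r *\<^sub>R idd II" "0 \<le> r" "r \<le> 1" using TrII by blast
  have "pp a \<rho> = r" using r(1) by (rule pr_of)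
  then show "cp a \<rho> = pp a \<rho> *\<^sub>R idd II" "0 \<le> pp a \<rho>" "pp a \<rho> \<le> 1" using r by auto
qed


lemma mset_block: "x \<in> set xs \<Longrightarrow> mset (F x) \<subseteq># mset (concat (map F xs))"
proof (induction xs)
  case Nil then show ?case by simp
next
  case (Cons y ys)
  show ?case
  proof (cases "x = y")
    case True then show ?thesis by simp
  next
    case False
    then have "mset (F x) \<subseteq># mset (concat (map F ys))" using Cons by simp
    then show ?thesis by (simp add: subset_mset.add_increasing)
  qed
qed

lemma mset_choice: "distinct xs \<Longrightarrow> K \<subseteq> set xs \<Longrightarrow> (\<forall>i\<in>K. h i \<in> set (F i)) \<Longrightarrow>
   image_mset h (mset_set K) \<subseteq># mset (concat (map F xs))"
proof (induction xs arbitrary: K)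
  case Nil then show ?case by simp
next
  case (Cons x xs)
  have fin: "finite K" using Cons.prems(2) finite_subset by blast
  let ?K' = "K - {x}"
  have IH: "image_mset h (mset_set ?K') \<subseteq># mset (concat (map F xs))"
    using Cons.IH[of ?K'] Cons.prems by auto
  show ?case
  proof (cases "x \<in> K")
    case True
    then have K: "K = insert x ?K'" by blast
    have "mset_set K = add_mset x (mset_set ?K')"
      using fin True by (metis Diff_insert_absorb K finite_Diff mset_set.insert Diff_iff singletonI)
    then have "image_mset h (mset_set K) = {#h x#} + image_mset h (mset_set ?K')" by simp
    moreover have "{#h x#} \<subseteq># mset (F x)" using Cons.prems(3) True by simp
    ultimately have "{#h x#} + image_mset h (mset_set ?K') \<subseteq># mset (F x) + mset (concat (map F xs))"
      using IH by (intro subset_mset.add_mono) auto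
    then show ?thesis using \<open>image_mset h (mset_set K) = {#h x#} + image_mset h (mset_set ?K')\<close> by simp
  next
    case False
    then have "K = ?K'" by blast
    then show ?thesis using IH by (simp add: subset_mset.add_increasing)
  qed
qed

lemma coarse_prefix: assumes "L1 @ L2 \<in> TS A B" "L1 \<noteq> []"
  shows "\<exists>T'\<in>TS A B. sum_list L1 \<in> set T'"
proof (cases "L2 = []")
  case True then show ?thesis using sum_test[OF assms(1)] by (metis append_Nil2 list.set_intros(1))
next
  case False
  define f where "f = (\<lambda>i::nat. if i < length L1 then 0 else (1::nat))"
  have img: "f ` {..<length (L1 @ L2)} = {..<2}"
  proof
    show "f ` {..<length (L1 @ L2)} \<subseteq> {..<2}" unfolding f_def by auto
    have "0 \<in> f ` {..<length (L1 @ L2)}" using assms(2) unfolding f_def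
      by (intro image_eqI[of _ _ 0]) auto
    moreover have "1 \<in> f ` {..<length (L1 @ L2)}" using False unfolding f_def
      by (intro image_eqI[of _ _ "length L1"]) auto
    ultimately show "{..<2} \<subseteq> f ` {..<length (L1 @ L2)}" by (auto simp: less_2_cases_iff)
  qed
  have "map (\<lambda>j. \<Sum>i\<in>{i. i < length (L1 @ L2) \<and> f i = j}. (L1 @ L2) ! i) [0..<2] \<in> TS A B"
    by (rule cg_test[OF assms(1) img])
  moreover have "{i. i < length (L1 @ L2) \<and> f i = 0} = {..<length L1}" unfolding f_def by auto
  then have "(\<Sum>i\<in>{i. i < length (L1 @ L2) \<and> f i = 0}. (L1 @ L2) ! i) = sum_list L1"
    by (simp add: sum_list_sum_nth atLeast0LessThan nth_append)
  ultimately show ?thesis by (intro bexI[of _ "map (\<lambda>j. \<Sum>i\<in>{i. i < length (L1 @ L2) \<and> f i = j}. (L1 @ L2) ! i) [0..<2]"]) (auto simp: upt_conv_Cons)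
qed

lemma split_test: assumes "T \<in> TS A B" "M \<subseteq># mset T"
  obtains xs ys where "xs @ ys \<in> TS A B" "mset xs = M"
proof -
  obtain xs where xs: "mset xs = M" using ex_mset by blast
  obtain ys where ys: "mset ys = mset T - M" using ex_mset by blast
  have "mset (xs @ ys) = mset T" using xs ys assms(2) by (simp add: subset_mset.add_diff_inverse)
  then have "xs @ ys \<in> TS A B" using perm_test[OF assms(1)] by blast
  then show ?thesis using that xs by blast
qed

lemma sub_test: assumes "T \<in> TS A B" "M \<subseteq># mset T" "M \<noteq> {#}"
  shows "\<exists>T'\<in>TS A B. sum_mset M \<in> set T'"
proof -
  obtain xs ys where "xs @ ys \<in> TS A B" "mset xs = M" using split_test[OF assms(1,2)] by blast
  moreover then have "xs \<noteq> []" using assms(3) by auto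
  ultimately show ?thesis using coarse_prefix by (metis sum_mset_sum_list)
qed

lemma sub_Tr: "T \<in> TS A B \<Longrightarrow> M \<subseteq># mset T \<Longrightarrow> M \<noteq> {#} \<Longrightarrow> sum_mset M \<in> TR A B"
  using sub_test tests_Tr by blast

lemma refines_iff: "refines \<Theta> A B D C \<longleftrightarrow>
   (\<exists>T\<in>TS A B. \<exists>M. M \<subseteq># mset T \<and> D \<in># M \<and> C = sum_mset M)"
proof
  assume "refines \<Theta> A B D C"
  then obtain T Y0 where T: "T \<in> TS A B" "Y0 \<subseteq> {..<length T}" "C = (\<Sum>j\<in>Y0. T ! j)"
    "D \<in> (\<lambda>j. T ! j) ` Y0" unfolding refines_def by blast
  define M where "M = image_mset (\<lambda>j. T ! j) (mset_set Y0)"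
  have fin: "finite Y0" using T(2) finite_subset by blast
  have "mset T = image_mset (\<lambda>j. T ! j) (mset_set {..<length T})"
    by (metis map_nth mset_map mset_upt atLeast0LessThan)
  moreover have "mset_set Y0 \<subseteq># mset_set {..<length T}"
    using T(2) by (simp add: subset_imp_msubset_mset_set)
  ultimately have "M \<subseteq># mset T" unfolding M_def by (simp add: image_mset_subseteq_mono)
  moreover have "D \<in># M" using T(4) fin unfolding M_def by auto
  moreover have "C = sum_mset M" using T(3) unfolding M_def by (simp add: sum_unfold_sum_mset)
  ultimately show "\<exists>T\<in>TS A B. \<exists>M. M \<subseteq># mset T \<and> D \<in># M \<and> C = sum_mset M" using T(1) by blast
next
  assume "\<exists>T\<in>TS A B. \<exists>M. M \<subseteq># mset T \<and> D \<in># M \<and> C = sum_mset M"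
  then obtain T M where T: "T \<in> TS A B" "M \<subseteq># mset T" "D \<in># M" "C = sum_mset M" by blast
  obtain xs ys where xy: "xs @ ys \<in> TS A B" "mset xs = M" using split_test[OF T(1,2)] by blast
  have "{..<length xs} \<subseteq> {..<length (xs @ ys)}" by auto
  moreover have "C = (\<Sum>j\<in>{..<length xs}. (xs @ ys) ! j)"
  proof -
    have "C = sum_list xs" using T(4) xy(2) by (metis sum_mset_sum_list)
    also have "\<dots> = (\<Sum>j\<in>{..<length xs}. xs ! j)" by (simp add: sum_list_sum_nth atLeast0LessThan)
    also have "\<dots> = (\<Sum>j\<in>{..<length xs}. (xs @ ys) ! j)" by (rule sum.cong) (auto simp: nth_append)
    finally show ?thesis .
  qed
  moreover have "D \<in> (\<lambda>j. (xs @ ys) ! j) ` {..<length xs}"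
    using T(3) xy(2) by (auto simp: in_set_conv_nth nth_append image_iff)
  ultimately show "refines \<Theta> A B D C" unfolding refines_def using xy(1) by blast
qed


lemma sum_list_scaleR: "sum_list (map (\<lambda>x. f x *\<^sub>R (v::'t)) xs) = sum_list (map f xs) *\<^sub>R v"
  by (induction xs) (auto simp: scaleR_left_distrib)
lemma sum_mset_scaleR: "sum_mset (image_mset (\<lambda>x. f x *\<^sub>R (v::'t)) M) = sum_mset (image_mset f M) *\<^sub>R v"
  by (induction M) (auto simp: scaleR_left_distrib)
lemma scaleR_sum_mset: "c *\<^sub>R sum_mset (M::'t multiset) = sum_mset (image_mset (\<lambda>x. c *\<^sub>R x) M)"
  by (induction M) (auto simp: scaleR_right_distrib)

lemma state_test: "\<sigma> \<in> TR II A \<Longrightarrow> \<exists>T\<in>TS II A. \<sigma> \<in> set T" by (rule Tr_test)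

lemma test_norm: assumes "T \<in> TS II A" shows "sum_list (map (\<lambda>x. cp (ee A) x) T) = idd II"
proof -
  have "concat (map (\<lambda>x. map (\<lambda>y. cp y x) [ee A]) T) \<in> TS II II"
    using seq_test[OF assms det_eff_test] by simp
  moreover have "concat (map (\<lambda>x. map (\<lambda>y. cp y x) [ee A]) T) = map (\<lambda>x. cp (ee A) x) T"
    by (induction T) auto
  ultimately show ?thesis using testII_sum by metis
qed

lemma pr_le_e: assumes "a \<in> TR A II" "\<sigma> \<in> TR II A" shows "pp a \<sigma> \<le> pp (ee A) \<sigma>"
proof -
  obtain W where W: "W \<in> TS A II" "a \<in> set W" using Tr_test[OF assms(1)] by blast
  have WT: "set W \<subseteq> TR A II" using tests_Tr[OF W(1)] by blast
  have "cp (ee A) \<sigma> = cp (sum_list W) \<sigma>" using sum_eff[OF W(1)] by simp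
  also have "\<dots> = sum_list (map (\<lambda>w. cp w \<sigma>) W)" by (rule cp_sum_list_l)
  also have "\<dots> = sum_list (map (\<lambda>w. pp w \<sigma> *\<^sub>R idd II) W)"
    using WT pr_eq(1)[OF _ assms(2)] by (intro arg_cong[where f=sum_list] map_cong) auto
  also have "\<dots> = sum_list (map (\<lambda>w. pp w \<sigma>) W) *\<^sub>R idd II" by (rule sum_list_scaleR)
  finally have "pp (ee A) \<sigma> = sum_list (map (\<lambda>w. pp w \<sigma>) W)" by (rule pr_of)
  moreover have "pp a \<sigma> \<le> sum_list (map (\<lambda>w. pp w \<sigma>) W)"
    using W(2) WT pr_eq(2)[OF _ assms(2)] by (intro member_le_sum_list) auto
  ultimately show ?thesis by simp
qed

lemma zero_Tr: assumes "\<sigma> \<in> TR II A" shows "0 \<in> TR II A"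
proof -
  have "(0::real) *\<^sub>R idd II \<in> TR II II" using TrII by auto
  then have "cp \<sigma> (0 *\<^sub>R idd II) \<in> TR II A" using cmp_Tr assms by blast
  then show ?thesis by (simp add: cp_scale_r cp_zero_r)
qed

lemma pr_zero: "pp a 0 = 0" by (rule pr_of) (simp add: cp_zero_r)

lemma zero_state: assumes "\<sigma> \<in> TR II A" "pp (ee A) \<sigma> = 0" shows "\<sigma> = 0"
proof (rule ident_state[OF assms(1) zero_Tr[OF assms(1)]], intro ballI)
  fix a assume a: "a \<in> TR A II"
  have "pp a \<sigma> = 0" using pr_le_e[OF a assms(1)] pr_eq(2)[OF a assms(1)] assms(2) by simp
  then show "pp a \<sigma> = pp a 0" by (simp add: pr_zero)
qed

lemma pr_e_pos: "\<sigma> \<in> TR II A \<Longrightarrow> \<sigma> \<noteq> 0 \<Longrightarrow> 0 < pp (ee A) \<sigma>"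
proof -
  assume a: "\<sigma> \<in> TR II A" "\<sigma> \<noteq> 0"
  have "0 \<le> pp (ee A) \<sigma>" using pr_eq(2)[OF det_eff_Tr a(1)] .
  moreover have "pp (ee A) \<sigma> \<noteq> 0" using zero_state[OF a(1)] a(2) by blast
  ultimately show ?thesis by linarith
qed

lemma e_after_test: assumes "T \<in> TS A A" shows "cp (ee A) (sum_list T) = ee A"
proof -
  have "concat (map (\<lambda>x. map (\<lambda>y. cp y x) [ee A]) [sum_list T]) \<in> TS A II"
    by (rule seq_test[OF sum_test[OF assms] det_eff_test])
  then have "[cp (ee A) (sum_list T)] \<in> TS A II" by simp
  then show ?thesis by (rule det_eff_unique)
qed


lemma idII_Tr: "idd II \<in> TR II II" by simp

lemma factor_gen: assumes "x \<in> TR X Y" "b \<in> TR B II" shows "tn x b = cp x (tn (idd X) b)"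
proof -
  have "tn (cp x (idd X)) (cp (idd II) b) = cp (tn x (idd II)) (tn (idd X) b)"
    by (rule interchange[OF idt_Tr assms(1) assms(2) idII_Tr])
  then show ?thesis using cmp_id[OF assms(1)] cmp_id[OF assms(2)] tens_unit[OF assms(1)] by simp
qed

lemma tnid_Tr: "b \<in> TR F II \<Longrightarrow> tn (idd X) b \<in> TR (scc X F) X"
  using tens_Tr[OF idt_Tr, of b F II X] by simp

lemma factor_app: assumes "a \<in> TR A II" "b \<in> TR F II" "Z \<in> TR II (scc A F)"
  shows "cp (tn a b) Z = cp a (cp (tn (idd A) b) Z)"
  using factor_gen[OF assms(1,2)] cmp_assoc[OF assms(3) tnid_Tr[OF assms(2)] assms(1)] by simp

lemma commute: assumes "x \<in> TR A A'" "d \<in> TR F II" "Z \<in> TR II (scc A F)"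
  shows "cp (tn (idd A') d) (cp (tn x (idd F)) Z) = cp x (cp (tn (idd A) d) Z)"
proof -
  have "tn (cp (idd A') x) (cp d (idd F)) = cp (tn (idd A') d) (tn x (idd F))"
    by (rule interchange[OF assms(1) idt_Tr idt_Tr assms(2)])
  then have 1: "cp (tn (idd A') d) (tn x (idd F)) = tn x d" using cmp_id[OF assms(1)] cmp_id[OF assms(2)] by simp
  have xF: "tn x (idd F) \<in> TR (scc A F) (scc A' F)" using tens_Tr[OF assms(1) idt_Tr] .
  have "cp (tn (idd A') d) (cp (tn x (idd F)) Z) = cp (cp (tn (idd A') d) (tn x (idd F))) Z"
    using cmp_assoc[OF assms(3) xF tnid_Tr[OF assms(2)]] by simp
  also have "\<dots> = cp (tn x d) Z" using 1 by simp
  also have "\<dots> = cp (cp x (tn (idd A) d)) Z" using factor_gen[OF assms(1,2)] by simp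
  also have "\<dots> = cp x (cp (tn (idd A) d) Z)" using cmp_assoc[OF assms(3) tnid_Tr[OF assms(2)] assms(1)] .
  finally show ?thesis .
qed

lemma tnid_state_Tr: "\<alpha> \<in> TR II C \<Longrightarrow> tn (idd A) \<alpha> \<in> TR A (scc A C)"
  using tens_Tr[OF idt_Tr, of \<alpha> II C A] by simp

lemma anc_eval: assumes "s \<in> TR II A" "\<alpha> \<in> TR II C" "a \<in> TR C II"
  shows "cp (tn (idd A) a) (cp (tn (idd A) \<alpha>) s) = pp a \<alpha> *\<^sub>R s"
proof -
  have "tn (cp (idd A) (idd A)) (cp a \<alpha>) = cp (tn (idd A) a) (tn (idd A) \<alpha>)"
    by (rule interchange[OF idt_Tr idt_Tr assms(2) assms(3)])
  then have "cp (tn (idd A) a) (tn (idd A) \<alpha>) = pp a \<alpha> *\<^sub>R idd A"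
    using pr_eq(1)[OF assms(3,2)] cmp_id(1)[OF idt_Tr] tens_idt[of A II]
    by (simp add: tn_scale_r)
  moreover have "cp (tn (idd A) a) (cp (tn (idd A) \<alpha>) s) = cp (cp (tn (idd A) a) (tn (idd A) \<alpha>)) s"
    using cmp_assoc[OF assms(1) tnid_state_Tr[OF assms(2)] tnid_Tr[OF assms(3)]] by simp
  ultimately show ?thesis using cmp_id(2)[OF assms(1)] by (simp add: cp_scale_l)
qed

lemma marg_step: assumes "\<Psi> \<in> TR II (scc (scc A C) B)" "a \<in> TR C II"
  shows "cp (tn (idd A) (tn a (ee B))) \<Psi> = cp (tn (idd A) a) (marg \<Theta> (scc A C) B \<Psi>)"
proof -
  have x2: "tn (idd A) a \<in> TR (scc A C) A" by (rule tnid_Tr[OF assms(2)])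
  have "tn (idd A) (tn a (ee B)) = tn (tn (idd A) a) (ee B)"
    using tens_assoc[OF idt_Tr assms(2) det_eff_Tr] by simp
  also have "\<dots> = cp (tn (idd A) a) (tn (idd (scc A C)) (ee B))"
    by (rule factor_gen[OF x2 det_eff_Tr])
  finally have "cp (tn (idd A) (tn a (ee B))) \<Psi> = cp (cp (tn (idd A) a) (tn (idd (scc A C)) (ee B))) \<Psi>"
    by simp
  also have "\<dots> = cp (tn (idd A) a) (cp (tn (idd (scc A C)) (ee B)) \<Psi>)"
    by (rule cmp_assoc[OF assms(1) tnid_Tr[OF det_eff_Tr] x2])
  finally show ?thesis unfolding marg_def .
qed


lemma test_prob_sum: assumes "T0 \<in> TS II B"
  shows "(\<Sum>i<length T0. pp (ee B) (T0 ! i)) = 1"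
proof -
  have TT: "\<And>i. i < length T0 \<Longrightarrow> T0 ! i \<in> TR II B" using tests_Tr[OF assms] by auto
  have "idd II = sum_list (map (\<lambda>x. cp (ee B) x) T0)" using test_norm[OF assms] by simp
  also have "\<dots> = (\<Sum>i<length T0. cp (ee B) (T0 ! i))"
    by (simp add: sum_list_sum_nth atLeast0LessThan)
  also have "\<dots> = (\<Sum>i<length T0. pp (ee B) (T0 ! i) *\<^sub>R idd II)"
    using TT pr_eq(1)[OF det_eff_Tr] by (intro sum.cong) auto
  also have "\<dots> = (\<Sum>i<length T0. pp (ee B) (T0 ! i)) *\<^sub>R idd II" by (simp add: scaleR_sum_left)
  finally have "1 *\<^sub>R idd II = (\<Sum>i<length T0. pp (ee B) (T0 ! i)) *\<^sub>R idd II" by simp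
  then show ?thesis using scal_inj by metis
qed

lemma repeat_step: assumes X: "X \<in> TR II B" and Y: "Y \<in> TR II B"
  shows "X + (1 - pp (ee B) X) *\<^sub>R Y \<in> TR II B"
proof -
  obtain S where S: "S \<in> TS II B" "Y \<in> set S" using Tr_test[OF Y] by blast
  obtain T0 where T0: "T0 \<in> TS II B" "X \<in> set T0" using Tr_test[OF X] by blast
  obtain k0 where k0: "k0 < length T0" "T0 ! k0 = X" using T0(2) by (auto simp: in_set_conv_nth)
  have TT: "\<And>i. i < length T0 \<Longrightarrow> T0 ! i \<in> TR II B" using tests_Tr[OF T0(1)] by auto
  define Sc where "Sc = (\<lambda>k. if k = k0 then [idd B] else map (\<lambda>y. cp y (ee B)) S)"
  have seS: "map (\<lambda>y. cp y (ee B)) S \<in> TS B B"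
    using seq_test[OF det_eff_test S(1)] by simp
  have Sc: "\<forall>i<length T0. Sc i \<in> TS B B" unfolding Sc_def using seS id_test by auto
  define L where "L = concat (map (\<lambda>i. map (\<lambda>y. cp y (T0 ! i)) (Sc i)) [0..<length T0])"
  have L: "L \<in> TS II B" unfolding L_def by (rule cond_test[OF T0(1) Sc])
  define h where "h = (\<lambda>i. if i = k0 then cp (idd B) (T0 ! k0) else cp (cp Y (ee B)) (T0 ! i))"
  define M where "M = image_mset h (mset_set {..<length T0})"
  have "M \<subseteq># mset L" unfolding M_def L_def
    by (rule mset_choice) (auto simp: h_def Sc_def S(2))
  moreover have "h k0 \<in># M" unfolding M_def using k0(1) by simp
  then have "M \<noteq> {#}" by auto
  ultimately have inTr: "sum_mset M \<in> TR II B" by (rule sub_Tr[OF L])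
  have hi: "h i = pp (ee B) (T0 ! i) *\<^sub>R Y" if "i < length T0" "i \<noteq> k0" for i
  proof -
    have "h i = cp Y (cp (ee B) (T0 ! i))" unfolding h_def using that cmp_assoc[OF TT[OF that(1)] det_eff_Tr Y] by simp
    also have "\<dots> = pp (ee B) (T0 ! i) *\<^sub>R Y"
      using pr_eq(1)[OF det_eff_Tr TT[OF that(1)]] cmp_id(1)[OF Y] by (simp add: cp_scale_r)
    finally show ?thesis .
  qed
  have fin: "finite {..<length T0}" by simp
  have "sum_mset M = (\<Sum>i<length T0. h i)" unfolding M_def by (simp add: sum_unfold_sum_mset)
  also have "\<dots> = h k0 + (\<Sum>i\<in>{..<length T0} - {k0}. h i)"
    using k0(1) by (simp add: sum.remove)
  also have "(\<Sum>i\<in>{..<length T0} - {k0}. h i) = (\<Sum>i\<in>{..<length T0} - {k0}. pp (ee B) (T0 ! i)) *\<^sub>R Y"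
    using hi by (simp add: scaleR_sum_left)
  also have "(\<Sum>i\<in>{..<length T0} - {k0}. pp (ee B) (T0 ! i)) = 1 - pp (ee B) X"
    using test_prob_sum[OF T0(1)] k0 sum.remove[OF fin, of k0 "\<lambda>i. pp (ee B) (T0 ! i)"] by simp
  also have "h k0 = X" unfolding h_def using k0 cmp_id(2)[OF X] by simp
  finally show ?thesis using inTr by simp
qed

lemma repeat_all: assumes X: "X \<in> TR II B"
  shows "(\<Sum>k<n. (1 - pp (ee B) X) ^ k) *\<^sub>R X \<in> TR II B"
proof (induction n)
  case 0 then show ?case using zero_Tr[OF X] by simp
next
  case (Suc n)
  let ?q = "1 - pp (ee B) X"
  have "X + ?q *\<^sub>R ((\<Sum>k<n. ?q ^ k) *\<^sub>R X) \<in> TR II B" by (rule repeat_step[OF X Suc])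
  moreover have "X + ?q *\<^sub>R ((\<Sum>k<n. ?q ^ k) *\<^sub>R X) = (\<Sum>k<Suc n. ?q ^ k) *\<^sub>R X"
  proof -
    have "(\<Sum>k<Suc n. ?q ^ k) = 1 + ?q * (\<Sum>k<n. ?q ^ k)"
      by (subst sum.lessThan_Suc_shift) (simp add: sum_distrib_left del: sum.lessThan_Suc)
    then show ?thesis by (simp add: scaleR_left_distrib)
  qed
  ultimately show ?case by simp
qed

lemma normalize: assumes X: "X \<in> TR II B" and pos: "0 < pp (ee B) X"
  shows "(1 / pp (ee B) X) *\<^sub>R X \<in> TR II B" "pp (ee B) ((1 / pp (ee B) X) *\<^sub>R X) = 1"
proof -
  let ?l = "pp (ee B) X"
  let ?q = "1 - ?l"
  have le1: "?l \<le> 1" using pr_eq(3)[OF det_eff_Tr X] .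
  have "norm ?q < 1" using pos le1 by simp
  then have "(\<lambda>k. ?q ^ k) sums (1 / (1 - ?q))" by (rule geometric_sums)
  then have "(\<lambda>n. \<Sum>k<n. ?q ^ k) \<longlonglongrightarrow> 1 / ?l" unfolding sums_def by simp
  then have lim: "(\<lambda>n. (\<Sum>k<n. ?q ^ k) *\<^sub>R X) \<longlonglongrightarrow> (1 / ?l) *\<^sub>R X"
    by (intro tendsto_scaleR tendsto_const)
  show "(1 / ?l) *\<^sub>R X \<in> TR II B"
    by (rule closed_sequentially[OF closed_St, where f="\<lambda>n. (\<Sum>k<n. ?q ^ k) *\<^sub>R X"])
       (rule repeat_all[OF X], rule lim)
  have "cp (ee B) ((1 / ?l) *\<^sub>R X) = 1 *\<^sub>R idd II"
    using pr_eq(1)[OF det_eff_Tr X] pos by (simp add: cp_scale_r)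
  then show "pp (ee B) ((1 / ?l) *\<^sub>R X) = 1" by (rule pr_of)
qed


lemma ref_refl: assumes "\<rho> \<in> TR II A" shows "refines \<Theta> II A \<rho> \<rho>"
proof -
  obtain T where "T \<in> TS II A" "\<rho> \<in> set T" using Tr_test[OF assms] by blast
  then show ?thesis unfolding refines_iff
    by (intro bexI[of _ T] exI[of _ "{#\<rho>#}"]) auto
qed

lemma ref_Tr: "refines \<Theta> A B D C \<Longrightarrow> D \<in> TR A B"
proof -
  assume "refines \<Theta> A B D C"
  then obtain T M where "T \<in> TS A B" "M \<subseteq># mset T" "D \<in># M" unfolding refines_iff by blast
  then have "D \<in> set T" by (metis mset_subset_eqD set_mset_mset)
  then show ?thesis using tests_Tr[OF \<open>T \<in> TS A B\<close>] by blast
qed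

lemma ref_scale: assumes "refines \<Theta> II A \<xi> Y" "0 \<le> c" "c \<le> 1"
  shows "refines \<Theta> II A (c *\<^sub>R \<xi>) (c *\<^sub>R Y)"
proof -
  obtain T M where T: "T \<in> TS II A" "M \<subseteq># mset T" "\<xi> \<in># M" "Y = sum_mset M"
    using assms(1) unfolding refines_iff by blast
  define P where "P = [c *\<^sub>R idd II, (1 - c) *\<^sub>R idd II]"
  have P: "P \<in> TS II II" unfolding P_def by (rule coin_test[OF assms(2,3)])
  define L where "L = concat (map (\<lambda>i. map (\<lambda>y. cp y (P ! i)) ((\<lambda>_. T) i)) [0..<length P])"
  have L: "L \<in> TS II A" unfolding L_def by (rule cond_test[OF P]) (use T(1) in simp)
  have blk: "mset (map (\<lambda>y. cp y (P ! 0)) T) \<subseteq># mset L"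
    unfolding L_def by (rule mset_block[where F="\<lambda>i. map (\<lambda>y. cp y (P ! i)) T"]) (simp add: P_def)
  have TT: "set T \<subseteq> TR II A" using tests_Tr[OF T(1)] by blast
  have "image_mset (\<lambda>y. c *\<^sub>R y) (mset T) = image_mset (\<lambda>y. cp y (P ! 0)) (mset T)"
    using TT by (intro image_mset_cong) (auto simp: P_def cp_scale_r cmp_id)
  then have "image_mset (\<lambda>y. c *\<^sub>R y) (mset T) \<subseteq># mset L" using blk by simp
  moreover have "image_mset (\<lambda>y. c *\<^sub>R y) M \<subseteq># image_mset (\<lambda>y. c *\<^sub>R y) (mset T)"
    using T(2) by (rule image_mset_subseteq_mono)
  ultimately have "image_mset (\<lambda>y. c *\<^sub>R y) M \<subseteq># mset L" by (rule subset_mset.trans[rotated])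
  moreover have "c *\<^sub>R \<xi> \<in># image_mset (\<lambda>y. c *\<^sub>R y) M" using T(3) by (simp add: image_iff) blast
  moreover have "c *\<^sub>R Y = sum_mset (image_mset (\<lambda>y. c *\<^sub>R y) M)" using T(4) by (simp add: scaleR_sum_mset)
  ultimately show ?thesis unfolding refines_iff using L by blast
qed

lemma ref_anc: assumes "\<Psi> \<in> TR II (scc A F)" "d \<in> TR F II"
  shows "refines \<Theta> II A (cp (tn (idd A) d) \<Psi>) (cp (tn (idd A) (ee F)) \<Psi>)"
proof -
  obtain P where P: "P \<in> TS II (scc A F)" "\<Psi> \<in> set P" using Tr_test[OF assms(1)] by blast
  obtain W where W: "W \<in> TS F II" "d \<in> set W" using Tr_test[OF assms(2)] by blast
  define Q where "Q = map (tn (idd A)) W"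
  have "concat (map (\<lambda>x. map (\<lambda>y. tn x y) W) [idd A]) \<in> TS (scc A F) (scc A II)"
    by (rule par_test[OF id_test W(1)])
  then have Q: "Q \<in> TS (scc A F) A" unfolding Q_def by simp
  define L where "L = concat (map (\<lambda>x. map (\<lambda>y. cp y x) Q) P)"
  have L: "L \<in> TS II A" unfolding L_def by (rule seq_test[OF P(1) Q])
  have "mset (map (\<lambda>y. cp y \<Psi>) Q) \<subseteq># mset L" unfolding L_def
    by (rule mset_block[OF P(2)])
  moreover have "cp (tn (idd A) d) \<Psi> \<in># mset (map (\<lambda>y. cp y \<Psi>) Q)" using W(2) unfolding Q_def by simp
  moreover have "cp (tn (idd A) (ee F)) \<Psi> = sum_mset (mset (map (\<lambda>y. cp y \<Psi>) Q))"
  proof -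
    have "sum_list Q = tn (idd A) (sum_list W)" unfolding Q_def by (simp add: tn_sum_list_r)
    then have "sum_list (map (\<lambda>y. cp y \<Psi>) Q) = cp (tn (idd A) (ee F)) \<Psi>"
      using sum_eff[OF W(1)] by (simp add: cp_sum_list_l[symmetric])
    then show ?thesis by (simp only: sum_mset_sum_list)
  qed
  ultimately show ?thesis unfolding refines_iff using L by blast
qed

lemma pure_step: assumes "\<Psi> \<in> TR II (scc A F)" "atomic \<Theta> II (scc A F) \<Psi>" "T \<in> TS A A"
  "cp (tn (sum_list T) (idd F)) \<Psi> = \<Psi>" "i < length T"
  shows "\<exists>l. 0 \<le> l \<and> l \<le> 1 \<and> cp (tn (T ! i) (idd F)) \<Psi> = l *\<^sub>R \<Psi>"
proof -
  obtain P where P: "P \<in> TS II (scc A F)" "\<Psi> \<in> set P" using Tr_test[OF assms(1)] by blast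
  define Q where "Q = map (\<lambda>x. tn x (idd F)) T"
  have "concat (map (\<lambda>x. map (\<lambda>y. tn x y) [idd F]) T) \<in> TS (scc A F) (scc A F)"
    by (rule par_test[OF assms(3) id_test])
  moreover have "concat (map (\<lambda>x. map (\<lambda>y. tn x y) [idd F]) T) = Q" unfolding Q_def by (induction T) auto
  ultimately have Q: "Q \<in> TS (scc A F) (scc A F)" by simp
  define L where "L = concat (map (\<lambda>x. map (\<lambda>y. cp y x) Q) P)"
  have L: "L \<in> TS II (scc A F)" unfolding L_def by (rule seq_test[OF P(1) Q])
  have "mset (map (\<lambda>y. cp y \<Psi>) Q) \<subseteq># mset L" unfolding L_def
    by (rule mset_block[OF P(2)])
  moreover have "cp (tn (T ! i) (idd F)) \<Psi> \<in># mset (map (\<lambda>y. cp y \<Psi>) Q)" using assms(5) unfolding Q_def by simp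
  moreover have "\<Psi> = sum_mset (mset (map (\<lambda>y. cp y \<Psi>) Q))"
  proof -
    have "sum_list Q = tn (sum_list T) (idd F)" unfolding Q_def by (simp add: tn_sum_list_l)
    then have "sum_list (map (\<lambda>y. cp y \<Psi>) Q) = \<Psi>"
      using assms(4) by (simp add: cp_sum_list_l[symmetric])
    then show ?thesis by (simp only: sum_mset_sum_list)
  qed
  ultimately have "refines \<Theta> II (scc A F) (cp (tn (T ! i) (idd F)) \<Psi>) \<Psi>"
    unfolding refines_iff using L by blast
  then show ?thesis using assms(2) unfolding atomic_def by blast
qed


lemma fix_lift: assumes \<Psi>: "\<Psi> \<in> TR II (scc A F)" and X: "X \<in> TR A A"
  and H: "\<And>d. d \<in> TR F II \<Longrightarrow> cp X (cp (tn (idd A) d) \<Psi>) = cp (tn (idd A) d) \<Psi>"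
  shows "cp (tn X (idd F)) \<Psi> = \<Psi>"
proof (rule locdisc)
  have XF: "tn X (idd F) \<in> TR (scc A F) (scc A F)" using tens_Tr[OF X idt_Tr] .
  show "cp (tn X (idd F)) \<Psi> \<in> TR II (scc A F)" using cmp_Tr[OF \<Psi> XF] .
  show "\<Psi> \<in> TR II (scc A F)" by (rule \<Psi>)
  show "\<forall>a\<in>TR A II. \<forall>b\<in>TR F II. pp (tn a b) (cp (tn X (idd F)) \<Psi>) = pp (tn a b) \<Psi>"
  proof (intro ballI)
    fix a b assume a: "a \<in> TR A II" and b: "b \<in> TR F II"
    have "cp (tn a b) (cp (tn X (idd F)) \<Psi>) = cp a (cp (tn (idd A) b) (cp (tn X (idd F)) \<Psi>))"
      by (rule factor_app[OF a b cmp_Tr[OF \<Psi> XF]])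
    also have "\<dots> = cp a (cp X (cp (tn (idd A) b) \<Psi>))" using commute[OF X b \<Psi>] by simp
    also have "\<dots> = cp a (cp (tn (idd A) b) \<Psi>)" using H[OF b] by simp
    also have "\<dots> = cp (tn a b) \<Psi>" using factor_app[OF a b \<Psi>] by simp
    finally show "pp (tn a b) (cp (tn X (idd F)) \<Psi>) = pp (tn a b) \<Psi>" unfolding pr_def by simp
  qed
qed

lemma build_state: assumes "refines \<Theta> II A \<sigma> \<rho>" "\<alpha>1 \<in> TR II C" "\<alpha>2 \<in> TR II C"
  shows "\<exists>\<tau>. \<tau> \<in> TR II A \<and> \<rho> = \<sigma> + \<tau> \<and>
     cp (tn (idd A) \<alpha>1) \<sigma> + cp (tn (idd A) \<alpha>2) \<tau> \<in> TR II (scc A C)"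
proof -
  obtain T M where T: "T \<in> TS II A" "M \<subseteq># mset T" "\<sigma> \<in># M" "\<rho> = sum_mset M"
    using assms(1) unfolding refines_iff by blast
  obtain zs where zs: "mset zs = M - {#\<sigma>#}" using ex_mset by blast
  obtain ys where ys: "mset ys = mset T - M" using ex_mset by blast
  define Lst where "Lst = \<sigma> # zs @ ys"
  have "mset Lst = add_mset \<sigma> (mset zs + mset ys)" by (simp add: Lst_def)
  also have "\<dots> = add_mset \<sigma> (M - {#\<sigma>#}) + (mset T - M)" unfolding zs ys by simp
  also have "add_mset \<sigma> (M - {#\<sigma>#}) = M" using T(3) by (rule insert_DiffM)
  also have "M + (mset T - M) = mset T" using T(2) by (rule subset_mset.add_diff_inverse)
  finally have "mset Lst = mset T" .
  then have Lst: "Lst \<in> TS II A" using perm_test[OF T(1)] by blast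
  have LT: "set Lst \<subseteq> TR II A" using tests_Tr[OF Lst] by blast
  define \<tau> where "\<tau> = sum_list zs"
  have \<rho>: "\<rho> = \<sigma> + \<tau>"
  proof -
    have "\<rho> = sum_mset (add_mset \<sigma> (M - {#\<sigma>#}))" using T(3,4) by (simp add: insert_DiffM)
    also have "\<dots> = \<sigma> + sum_mset (mset zs)" using zs by simp
    finally show ?thesis by (simp add: sum_mset_sum_list \<tau>_def)
  qed
  have \<sigma>Tr: "\<sigma> \<in> TR II A" using LT unfolding Lst_def by simp
  have \<tau>Tr: "\<tau> \<in> TR II A"
  proof (cases "zs = []")
    case True then show ?thesis unfolding \<tau>_def using zero_Tr[OF \<sigma>Tr] by simp
  next
    case False
    have "mset zs \<subseteq># mset Lst" unfolding Lst_def by simp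
    then have "sum_mset (mset zs) \<in> TR II A" using sub_Tr[OF Lst] False by simp
    then show ?thesis unfolding \<tau>_def by (simp add: sum_mset_sum_list)
  qed
  obtain W1 where W1: "W1 \<in> TS II C" "\<alpha>1 \<in> set W1" using Tr_test[OF assms(2)] by blast
  obtain W2 where W2: "W2 \<in> TS II C" "\<alpha>2 \<in> set W2" using Tr_test[OF assms(3)] by blast
  have V: "map (tn (idd A)) W \<in> TS A (scc A C)" if "W \<in> TS II C" for W
    using par_test[OF id_test that, of A] by simp
  define Sc where "Sc = (\<lambda>i. if i = 0 then map (tn (idd A)) W1
     else if i \<le> length zs then map (tn (idd A)) W2 else map (tn (idd A)) W1)"
  have Sc: "\<forall>i<length Lst. Sc i \<in> TS A (scc A C)" unfolding Sc_def using V W1 W2 by auto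
  define L where "L = concat (map (\<lambda>i. map (\<lambda>y. cp y (Lst ! i)) (Sc i)) [0..<length Lst])"
  have L: "L \<in> TS II (scc A C)" unfolding L_def by (rule cond_test[OF Lst Sc])
  define h where "h = (\<lambda>i. if i = 0 then cp (tn (idd A) \<alpha>1) \<sigma> else cp (tn (idd A) \<alpha>2) (Lst ! i))"
  define K where "K = {..length zs}"
  have "image_mset h (mset_set K) \<subseteq># mset L" unfolding L_def
  proof (rule mset_choice)
    show "distinct [0..<length Lst]" by simp
    show "K \<subseteq> set [0..<length Lst]" unfolding K_def Lst_def by auto
    show "\<forall>i\<in>K. h i \<in> set (map (\<lambda>y. cp y (Lst ! i)) (Sc i))"
      unfolding K_def h_def Sc_def using W1(2) W2(2) by (auto simp: Lst_def)
  qed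
  moreover have "h 0 \<in># image_mset h (mset_set K)" unfolding K_def by simp
  then have "image_mset h (mset_set K) \<noteq> {#}" by auto
  ultimately have inTr: "sum_mset (image_mset h (mset_set K)) \<in> TR II (scc A C)" by (rule sub_Tr[OF L])
  have "sum_mset (image_mset h (mset_set K)) = (\<Sum>i\<le>length zs. h i)" unfolding K_def
    by (simp add: sum_unfold_sum_mset)
  also have "\<dots> = h 0 + (\<Sum>i<length zs. h (Suc i))" by (rule sum.atMost_shift)
  also have "(\<Sum>i<length zs. h (Suc i)) = (\<Sum>i<length zs. cp (tn (idd A) \<alpha>2) (zs ! i))"
  proof (rule sum.cong)
    fix i assume "i \<in> {..<length zs}"
    then have "Lst ! Suc i = zs ! i" by (simp add: Lst_def nth_append)
    then show "h (Suc i) = cp (tn (idd A) \<alpha>2) (zs ! i)" by (simp add: h_def)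
  qed simp
  also have "\<dots> = cp (tn (idd A) \<alpha>2) \<tau>" unfolding \<tau>_def
    by (simp only: cp_sum_r[symmetric] sum_list_sum_nth atLeast0LessThan)
  also have "h 0 = cp (tn (idd A) \<alpha>1) \<sigma>" by (simp add: h_def)
  finally have "sum_mset (image_mset h (mset_set K)) = cp (tn (idd A) \<alpha>1) \<sigma> + cp (tn (idd A) \<alpha>2) \<tau>" .
  then show ?thesis using inTr \<rho> \<tau>Tr by metis
qed


lemma e_anc: assumes "s \<in> TR II A" "\<alpha> \<in> TR II C" "pp (ee C) \<alpha> = 1"
  shows "cp (ee (scc A C)) (cp (tn (idd A) \<alpha>) s) = cp (ee A) s"
proof -
  have Z: "cp (tn (idd A) \<alpha>) s \<in> TR II (scc A C)" using cmp_Tr[OF assms(1) tnid_state_Tr[OF assms(2)]] .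
  have "cp (ee (scc A C)) (cp (tn (idd A) \<alpha>) s) = cp (ee A) (cp (tn (idd A) (ee C)) (cp (tn (idd A) \<alpha>) s))"
    using factor_app[OF det_eff_Tr det_eff_Tr Z] causal2 by simp
  also have "\<dots> = cp (ee A) s" using anc_eval[OF assms(1,2) det_eff_Tr] assms(3) by simp
  finally show ?thesis .
qed

lemma key: assumes pur: "purification \<Theta>" and \<rho>: "\<rho> \<in> TR II A" "\<rho> \<noteq> 0" and T: "T \<in> TS A A"
  and H: "\<And>\<xi>. refines \<Theta> II A \<xi> \<rho> \<Longrightarrow> cp (sum_list T) \<xi> = \<xi>"
  and \<sigma>: "refines \<Theta> II A \<sigma> \<rho>"
  shows "\<exists>l. \<forall>i<length T. 0 \<le> l i \<and> cp (T ! i) \<sigma> = l i *\<^sub>R \<sigma> \<and> cp (T ! i) \<rho> = l i *\<^sub>R \<rho>"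
proof -
  obtain C \<alpha>1 \<alpha>2 a1 a2 where D: "\<alpha>1 \<in> TR II C" "\<alpha>2 \<in> TR II C" "[a1, a2] \<in> TS C II"
    "pp a1 \<alpha>1 = 1" "pp a2 \<alpha>2 = 1" "pp a1 \<alpha>2 = 0" "pp a2 \<alpha>1 = 0"
    using distinguishable by blast
  have a1: "a1 \<in> TR C II" and a2: "a2 \<in> TR C II" using tests_Tr[OF D(3)] by auto
  have esum: "ee C = a1 + a2" using sum_eff[OF D(3)] by simp
  have pe1: "pp (ee C) \<alpha>1 = 1"
  proof (rule pr_of)
    show "cp (ee C) \<alpha>1 = 1 *\<^sub>R idd II" using pr_eq(1)[OF a1 D(1)] pr_eq(1)[OF a2 D(1)] D(4,7)
      by (simp add: esum cp_add_l)
  qed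
  have pe2: "pp (ee C) \<alpha>2 = 1"
  proof (rule pr_of)
    show "cp (ee C) \<alpha>2 = 1 *\<^sub>R idd II" using pr_eq(1)[OF a1 D(2)] pr_eq(1)[OF a2 D(2)] D(5,6)
      by (simp add: esum cp_add_l)
  qed
  have \<sigma>Tr: "\<sigma> \<in> TR II A" using ref_Tr[OF \<sigma>] .
  obtain \<tau> where \<tau>: "\<tau> \<in> TR II A" "\<rho> = \<sigma> + \<tau>"
    "cp (tn (idd A) \<alpha>1) \<sigma> + cp (tn (idd A) \<alpha>2) \<tau> \<in> TR II (scc A C)"
    using build_state[OF \<sigma> D(1,2)] by blast
  define S0 where "S0 = cp (tn (idd A) \<alpha>1) \<sigma> + cp (tn (idd A) \<alpha>2) \<tau>"
  have S0Tr: "S0 \<in> TR II (scc A C)" using \<tau>(3) unfolding S0_def .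
  define lam where "lam = pp (ee A) \<rho>"
  have lpos: "0 < lam" unfolding lam_def using pr_e_pos[OF \<rho>] .
  have lle: "lam \<le> 1" unfolding lam_def using pr_eq(3)[OF det_eff_Tr \<rho>(1)] .
  have "cp (ee (scc A C)) S0 = cp (ee A) \<rho>"
    unfolding S0_def using e_anc[OF \<sigma>Tr D(1) pe1] e_anc[OF \<tau>(1) D(2) pe2] \<tau>(2)
    by (simp add: cp_add_r)
  then have "cp (ee (scc A C)) S0 = lam *\<^sub>R idd II" using pr_eq(1)[OF det_eff_Tr \<rho>(1)] lam_def by simp
  then have eS0: "pp (ee (scc A C)) S0 = lam" by (rule pr_of)
  define Sg where "Sg = (1 / lam) *\<^sub>R S0"
  have SgTr: "Sg \<in> TR II (scc A C)" "pp (ee (scc A C)) Sg = 1"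
    using normalize[OF S0Tr] eS0 lpos unfolding Sg_def by auto
  have "normalized \<Theta> (scc A C) Sg" unfolding normalized_def St_def using SgTr by simp
  then obtain B \<Psi> where \<Psi>: "normalized \<Theta> (scc (scc A C) B) \<Psi>" "pure_state \<Theta> (scc (scc A C) B) \<Psi>"
    "marg \<Theta> (scc A C) B \<Psi> = Sg"
    using pur unfolding purification_def by blast
  have \<Psi>Tr0: "\<Psi> \<in> TR II (scc (scc A C) B)" using \<Psi>(1) unfolding normalized_def St_def by simp
  define F where "F = scc C B"
  have \<Psi>Tr: "\<Psi> \<in> TR II (scc A F)" using \<Psi>Tr0 unfolding F_def by (simp add: sc_assoc)
  have atom: "atomic \<Theta> II (scc A F) \<Psi>" using \<Psi>(2) unfolding pure_state_def F_def by (simp add: sc_assoc)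
  have g: "cp (tn (idd A) (tn a (ee B))) \<Psi> = (1 / lam) *\<^sub>R (pp a \<alpha>1 *\<^sub>R \<sigma> + pp a \<alpha>2 *\<^sub>R \<tau>)"
    if a: "a \<in> TR C II" for a
  proof -
    have "cp (tn (idd A) (tn a (ee B))) \<Psi> = cp (tn (idd A) a) Sg"
      using marg_step[OF \<Psi>Tr0 a] \<Psi>(3) by simp
    also have "\<dots> = (1 / lam) *\<^sub>R (pp a \<alpha>1 *\<^sub>R \<sigma> + pp a \<alpha>2 *\<^sub>R \<tau>)"
      unfolding Sg_def S0_def using anc_eval[OF \<sigma>Tr D(1) a] anc_eval[OF \<tau>(1) D(2) a]
      by (simp add: cp_scale_r cp_add_r)
    finally show ?thesis .
  qed
  have dTr: "tn a (ee B) \<in> TR F II" if "a \<in> TR C II" for a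
    using tens_Tr[OF that det_eff_Tr] unfolding F_def by simp
  have eF: "ee F = tn (ee C) (ee B)" unfolding F_def by (rule causal2)
  have margA: "cp (tn (idd A) (ee F)) \<Psi> = (1 / lam) *\<^sub>R \<rho>"
    using g[OF det_eff_Tr] pe1 pe2 \<tau>(2) eF by simp
  have XTr: "sum_list T \<in> TR A A" by (rule sum_Tr[OF T])
  have fixP: "cp (tn (sum_list T) (idd F)) \<Psi> = \<Psi>"
  proof (rule fix_lift[OF \<Psi>Tr XTr])
    fix d assume d: "d \<in> TR F II"
    have "refines \<Theta> II A (cp (tn (idd A) d) \<Psi>) ((1 / lam) *\<^sub>R \<rho>)"
      using ref_anc[OF \<Psi>Tr d] margA by simp
    then have "refines \<Theta> II A (lam *\<^sub>R cp (tn (idd A) d) \<Psi>) (lam *\<^sub>R ((1 / lam) *\<^sub>R \<rho>))"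
      using ref_scale lpos lle by (metis less_eq_real_def)
    then have "refines \<Theta> II A (lam *\<^sub>R cp (tn (idd A) d) \<Psi>) \<rho>" using lpos by simp
    then have "cp (sum_list T) (lam *\<^sub>R cp (tn (idd A) d) \<Psi>) = lam *\<^sub>R cp (tn (idd A) d) \<Psi>" by (rule H)
    then show "cp (sum_list T) (cp (tn (idd A) d) \<Psi>) = cp (tn (idd A) d) \<Psi>"
      using lpos by (simp add: cp_scale_r)
  qed
  have "\<forall>i<length T. \<exists>l. 0 \<le> l \<and> l \<le> 1 \<and> cp (tn (T ! i) (idd F)) \<Psi> = l *\<^sub>R \<Psi>"
    using pure_step[OF \<Psi>Tr atom T fixP] by blast
  then obtain l where l: "\<forall>i<length T. 0 \<le> l i \<and> cp (tn (T ! i) (idd F)) \<Psi> = l i *\<^sub>R \<Psi>"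
    by metis
  have TT: "\<And>i. i < length T \<Longrightarrow> T ! i \<in> TR A A" using tests_Tr[OF T] by auto
  have act: "cp (T ! i) (pp a \<alpha>1 *\<^sub>R \<sigma> + pp a \<alpha>2 *\<^sub>R \<tau>) = l i *\<^sub>R (pp a \<alpha>1 *\<^sub>R \<sigma> + pp a \<alpha>2 *\<^sub>R \<tau>)"
    if i: "i < length T" and a: "a \<in> TR C II" for i a
  proof -
    have "cp (T ! i) (cp (tn (idd A) (tn a (ee B))) \<Psi>) = cp (tn (idd A) (tn a (ee B))) (cp (tn (T ! i) (idd F)) \<Psi>)"
      using commute[OF TT[OF i] dTr[OF a] \<Psi>Tr] by simp
    also have "\<dots> = l i *\<^sub>R cp (tn (idd A) (tn a (ee B))) \<Psi>" using l i by (simp add: cp_scale_r)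
    finally have "cp (T ! i) ((1 / lam) *\<^sub>R (pp a \<alpha>1 *\<^sub>R \<sigma> + pp a \<alpha>2 *\<^sub>R \<tau>)) = l i *\<^sub>R ((1 / lam) *\<^sub>R (pp a \<alpha>1 *\<^sub>R \<sigma> + pp a \<alpha>2 *\<^sub>R \<tau>))"
      using g[OF a] by simp
    then have "lam *\<^sub>R cp (T ! i) ((1 / lam) *\<^sub>R (pp a \<alpha>1 *\<^sub>R \<sigma> + pp a \<alpha>2 *\<^sub>R \<tau>)) = lam *\<^sub>R (l i *\<^sub>R ((1 / lam) *\<^sub>R (pp a \<alpha>1 *\<^sub>R \<sigma> + pp a \<alpha>2 *\<^sub>R \<tau>)))"
      by simp
    then show ?thesis using lpos by (simp add: cp_scale_r)
  qed
  have s1: "cp (T ! i) \<sigma> = l i *\<^sub>R \<sigma>" if "i < length T" for i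
    using act[OF that a1] D(4,6) by simp
  have s2: "cp (T ! i) \<tau> = l i *\<^sub>R \<tau>" if "i < length T" for i
    using act[OF that a2] D(5,7) by simp
  show ?thesis
    using l s1 s2 \<tau>(2) by (intro exI[of _ l]) (auto simp: cp_add_r scaleR_right_distrib)
qed


lemma sum_mset_nonneg_real: "(\<And>x. x \<in># N \<Longrightarrow> 0 \<le> f x) \<Longrightarrow> 0 \<le> sum_mset (image_mset (f::_ \<Rightarrow> real) N)"
  by (induction N) auto

lemma ref_zero: assumes "refines \<Theta> II A \<sigma> 0" shows "\<sigma> = 0"
proof -
  obtain T M where T: "T \<in> TS II A" "M \<subseteq># mset T" "\<sigma> \<in># M" "0 = sum_mset M"
    using assms unfolding refines_iff by blast
  have MT: "x \<in> TR II A" if "x \<in># M" for x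
  proof -
    have "x \<in> set T" using that T(2) by (metis mset_subset_eqD set_mset_mset)
    then show ?thesis using tests_Tr[OF T(1)] by blast
  qed
  have "0 = cp (ee A) (sum_mset M)" using T(4) by (simp add: cp_zero_r)
  also have "\<dots> = sum_mset (image_mset (\<lambda>x. cp (ee A) x) M)" by (rule cp_sum_mset_r)
  also have "\<dots> = sum_mset (image_mset (\<lambda>x. pp (ee A) x *\<^sub>R idd II) M)"
    using MT pr_eq(1)[OF det_eff_Tr] by (intro arg_cong[where f=sum_mset] image_mset_cong) auto
  also have "\<dots> = sum_mset (image_mset (\<lambda>x. pp (ee A) x) M) *\<^sub>R idd II" by (rule sum_mset_scaleR)
  finally have "0 *\<^sub>R idd II = sum_mset (image_mset (\<lambda>x. pp (ee A) x) M) *\<^sub>R idd II" by simp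
  then have s0: "sum_mset (image_mset (\<lambda>x. pp (ee A) x) M) = 0" using scal_inj by metis
  have "sum_mset (image_mset (\<lambda>x. pp (ee A) x) M) = pp (ee A) \<sigma> + sum_mset (image_mset (\<lambda>x. pp (ee A) x) (M - {#\<sigma>#}))"
    using T(3) by (metis image_mset_add_mset insert_DiffM sum_mset.insert)
  moreover have "0 \<le> sum_mset (image_mset (\<lambda>x. pp (ee A) x) (M - {#\<sigma>#}))"
    using MT pr_eq(2)[OF det_eff_Tr] by (intro sum_mset_nonneg_real) (meson in_diffD)
  moreover have "0 \<le> pp (ee A) \<sigma>" using MT[OF T(3)] pr_eq(2)[OF det_eff_Tr] by blast
  ultimately have "pp (ee A) \<sigma> = 0" using s0 by linarith
  then show ?thesis using zero_state MT[OF T(3)] by blast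
qed

lemma sum_cp: "(\<Sum>i<length T. cp (T ! i) \<sigma>) = cp (sum_list T) \<sigma>"
  by (simp add: sum_list_sum_nth atLeast0LessThan cp_sum_l)

lemma part1: assumes pur: "purification \<Theta>" and \<rho>: "\<rho> \<in> TR II A" and T: "T \<in> TS A A"
  shows "(\<forall>\<sigma>\<in>refset \<Theta> II A \<rho>. (\<Sum>i<length T. cp (T ! i) \<sigma>) = \<sigma>)
          \<longleftrightarrow> (\<exists>p::nat \<Rightarrow> real. (\<forall>i<length T. 0 \<le> p i) \<and>
                (\<forall>\<sigma>\<in>refset \<Theta> II A \<rho>. \<forall>i<length T. cp (T ! i) \<sigma> = p i *\<^sub>R \<sigma>))"
proof
  assume H0: "\<forall>\<sigma>\<in>refset \<Theta> II A \<rho>. (\<Sum>i<length T. cp (T ! i) \<sigma>) = \<sigma>"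
  have H: "\<And>\<xi>. refines \<Theta> II A \<xi> \<rho> \<Longrightarrow> cp (sum_list T) \<xi> = \<xi>"
    using H0 unfolding refset_def sum_cp by blast
  show "\<exists>p::nat \<Rightarrow> real. (\<forall>i<length T. 0 \<le> p i) \<and>
                (\<forall>\<sigma>\<in>refset \<Theta> II A \<rho>. \<forall>i<length T. cp (T ! i) \<sigma> = p i *\<^sub>R \<sigma>)"
  proof (cases "\<rho> = 0")
    case True
    have "\<forall>\<sigma>\<in>refset \<Theta> II A \<rho>. \<forall>i<length T. cp (T ! i) \<sigma> = 0 *\<^sub>R \<sigma>"
    proof (intro ballI allI impI)
      fix \<sigma> i assume "\<sigma> \<in> refset \<Theta> II A \<rho>"
      then have "\<sigma> = 0" using ref_zero True unfolding refset_def by blast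
      then show "cp (T ! i) \<sigma> = 0 *\<^sub>R \<sigma>" by (simp add: cp_zero_r)
    qed
    then show ?thesis by (intro exI[of _ "\<lambda>_. 0"]) auto
  next
    case False
    obtain l0 where l0: "\<forall>i<length T. 0 \<le> l0 i \<and> cp (T ! i) \<rho> = l0 i *\<^sub>R \<rho> \<and> cp (T ! i) \<rho> = l0 i *\<^sub>R \<rho>"
      using key[OF pur \<rho> False T H ref_refl[OF \<rho>]] by blast
    have "\<forall>\<sigma>\<in>refset \<Theta> II A \<rho>. \<forall>i<length T. cp (T ! i) \<sigma> = l0 i *\<^sub>R \<sigma>"
    proof (intro ballI allI impI)
      fix \<sigma> i assume s: "\<sigma> \<in> refset \<Theta> II A \<rho>" and i: "i < length T"
      obtain l where l: "\<forall>i<length T. 0 \<le> l i \<and> cp (T ! i) \<sigma> = l i *\<^sub>R \<sigma> \<and> cp (T ! i) \<rho> = l i *\<^sub>R \<rho>"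
        using key[OF pur \<rho> False T H] s unfolding refset_def by blast
      have "l i *\<^sub>R \<rho> = l0 i *\<^sub>R \<rho>" using l l0 i by metis
      then have "l i = l0 i" using False by (simp add: scaleR_cancel_right)
      then show "cp (T ! i) \<sigma> = l0 i *\<^sub>R \<sigma>" using l i by metis
    qed
    then show ?thesis using l0 by blast
  qed
next
  assume "\<exists>p::nat \<Rightarrow> real. (\<forall>i<length T. 0 \<le> p i) \<and>
                (\<forall>\<sigma>\<in>refset \<Theta> II A \<rho>. \<forall>i<length T. cp (T ! i) \<sigma> = p i *\<^sub>R \<sigma>)"
  then obtain p where p: "\<forall>\<sigma>\<in>refset \<Theta> II A \<rho>. \<forall>i<length T. cp (T ! i) \<sigma> = p i *\<^sub>R \<sigma>" by blast
  show "\<forall>\<sigma>\<in>refset \<Theta> II A \<rho>. (\<Sum>i<length T. cp (T ! i) \<sigma>) = \<sigma>"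
  proof
    fix \<sigma> assume s: "\<sigma> \<in> refset \<Theta> II A \<rho>"
    have sTr: "\<sigma> \<in> TR II A" using s ref_Tr unfolding refset_def by blast
    have sum: "(\<Sum>i<length T. cp (T ! i) \<sigma>) = (\<Sum>i<length T. p i) *\<^sub>R \<sigma>"
      using p s by (simp add: scaleR_sum_left)
    show "(\<Sum>i<length T. cp (T ! i) \<sigma>) = \<sigma>"
    proof (cases "\<sigma> = 0")
      case True then show ?thesis by (simp add: cp_zero_r)
    next
      case False
      have "cp (ee A) (cp (sum_list T) \<sigma>) = cp (cp (ee A) (sum_list T)) \<sigma>"
        using cmp_assoc[OF sTr sum_Tr[OF T] det_eff_Tr] by simp
      also have "\<dots> = cp (ee A) \<sigma>" using e_after_test[OF T] by simp
      finally have "(\<Sum>i<length T. p i) *\<^sub>R cp (ee A) \<sigma> = cp (ee A) \<sigma>"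
        using sum sum_cp by (simp add: cp_scale_r)
      then have "((\<Sum>i<length T. p i) * pp (ee A) \<sigma>) *\<^sub>R idd II = pp (ee A) \<sigma> *\<^sub>R idd II"
        using pr_eq(1)[OF det_eff_Tr sTr] by simp
      then have "(\<Sum>i<length T. p i) * pp (ee A) \<sigma> = pp (ee A) \<sigma>" by (rule scal_inj)
      moreover have "0 < pp (ee A) \<sigma>" using pr_e_pos[OF sTr False] .
      ultimately have "(\<Sum>i<length T. p i) = 1" by simp
      then show ?thesis using sum by simp
    qed
  qed
qed

lemma vanish_span: assumes "linear f" "\<forall>x\<in>S. f x = 0" "x \<in> span S" shows "f x = 0"
  using linear_eq_0_on_span[OF assms(1) _ assms(3)] assms(2) by blast

lemma part2: assumes pur: "purification \<Theta>" and T: "T \<in> TS A A" and int: "internal \<Theta> A \<rho>"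
  shows "(\<forall>\<sigma>\<in>St \<Theta> A. (\<Sum>i<length T. cp (T ! i) \<sigma>) = \<sigma>)
           \<longleftrightarrow> (\<exists>p::nat \<Rightarrow> real. (\<forall>i<length T. 0 \<le> p i) \<and>
                 (\<forall>\<sigma>\<in>St \<Theta> A. \<forall>i<length T. cp (T ! i) \<sigma> = p i *\<^sub>R \<sigma>))"
proof -
  have \<rho>: "\<rho> \<in> TR II A" and sp: "span (refset \<Theta> II A \<rho>) = span (TR II A)"
    using int unfolding internal_def St_def by auto
  have RS: "refset \<Theta> II A \<rho> \<subseteq> TR II A" unfolding refset_def using ref_Tr by blast
  have inspan: "\<sigma> \<in> span (refset \<Theta> II A \<rho>)" if "\<sigma> \<in> TR II A" for \<sigma>
    using sp that span_base by blast
  note P1 = part1[OF pur \<rho> T]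
  show ?thesis unfolding St_def
  proof
    assume A0: "\<forall>\<sigma>\<in>TR II A. (\<Sum>i<length T. cp (T ! i) \<sigma>) = \<sigma>"
    then obtain p where p: "\<forall>i<length T. 0 \<le> p i"
      "\<forall>\<sigma>\<in>refset \<Theta> II A \<rho>. \<forall>i<length T. cp (T ! i) \<sigma> = p i *\<^sub>R \<sigma>"
      using P1 RS by blast
    have "\<forall>\<sigma>\<in>TR II A. \<forall>i<length T. cp (T ! i) \<sigma> = p i *\<^sub>R \<sigma>"
    proof (intro ballI allI impI)
      fix \<sigma> i assume s: "\<sigma> \<in> TR II A" and i: "i < length T"
      have lin: "linear (\<lambda>x. cp (T ! i) x - p i *\<^sub>R x)"
        by (rule linearI) (simp_all add: cp_add_r cp_scale_r algebra_simps)
      have "cp (T ! i) \<sigma> - p i *\<^sub>R \<sigma> = 0"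
        by (rule vanish_span[OF lin _ inspan[OF s]]) (use p(2) i in auto)
      then show "cp (T ! i) \<sigma> = p i *\<^sub>R \<sigma>" by simp
    qed
    then show "\<exists>p::nat \<Rightarrow> real. (\<forall>i<length T. 0 \<le> p i) \<and>
                 (\<forall>\<sigma>\<in>TR II A. \<forall>i<length T. cp (T ! i) \<sigma> = p i *\<^sub>R \<sigma>)" using p(1) by blast
  next
    assume "\<exists>p::nat \<Rightarrow> real. (\<forall>i<length T. 0 \<le> p i) \<and>
                 (\<forall>\<sigma>\<in>TR II A. \<forall>i<length T. cp (T ! i) \<sigma> = p i *\<^sub>R \<sigma>)"
    then have "\<forall>\<sigma>\<in>refset \<Theta> II A \<rho>. (\<Sum>i<length T. cp (T ! i) \<sigma>) = \<sigma>"
      using P1 RS by blast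
    show "\<forall>\<sigma>\<in>TR II A. (\<Sum>i<length T. cp (T ! i) \<sigma>) = \<sigma>"
    proof
      fix \<sigma> assume s: "\<sigma> \<in> TR II A"
      have lin: "linear (\<lambda>x. cp (sum_list T) x - x)"
        by (rule linearI) (simp_all add: cp_add_r cp_scale_r algebra_simps)
      have "cp (sum_list T) \<sigma> - \<sigma> = 0"
        by (rule vanish_span[OF lin _ inspan[OF s]])
           (use \<open>\<forall>\<sigma>\<in>refset \<Theta> II A \<rho>. (\<Sum>i<length T. cp (T ! i) \<sigma>) = \<sigma>\<close> in \<open>auto simp: sum_cp\<close>)
      then show "(\<Sum>i<length T. cp (T ! i) \<sigma>) = \<sigma>" by (simp add: sum_cp)
    qed
  qed
qed

end

theorem mainTheorem5:
  fixes \<Theta> :: "('s, 't::real_normed_vector) opt"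
    and A :: 's and \<rho> :: 't and T :: "'t list"
  assumes "OPT \<Theta>" and "purification \<Theta>"
    and "\<rho> \<in> St \<Theta> A" and "T \<in> Tests \<Theta> A A"
  shows "((\<forall>\<sigma>\<in>refset \<Theta> (Isys \<Theta>) A \<rho>. (\<Sum>i<length T. cmp \<Theta> (T ! i) \<sigma>) = \<sigma>)
          \<longleftrightarrow> (\<exists>p::nat \<Rightarrow> real. (\<forall>i<length T. 0 \<le> p i) \<and>
                (\<forall>\<sigma>\<in>refset \<Theta> (Isys \<Theta>) A \<rho>. \<forall>i<length T. cmp \<Theta> (T ! i) \<sigma> = p i *\<^sub>R \<sigma>)))
       \<and> (internal \<Theta> A \<rho> \<longrightarrow>
          ((\<forall>\<sigma>\<in>St \<Theta> A. (\<Sum>i<length T. cmp \<Theta> (T ! i) \<sigma>) = \<sigma>)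
           \<longleftrightarrow> (\<exists>p::nat \<Rightarrow> real. (\<forall>i<length T. 0 \<le> p i) \<and>
                 (\<forall>\<sigma>\<in>St \<Theta> A. \<forall>i<length T. cmp \<Theta> (T ! i) \<sigma> = p i *\<^sub>R \<sigma>))))"
proof -
  interpret opt_ctx \<Theta> by unfold_locales (rule assms(1))
  have \<rho>: "\<rho> \<in> Tr \<Theta> (Isys \<Theta>) A" using assms(3) unfolding St_def .
  show ?thesis using part1[OF assms(2) \<rho> assms(4)] part2[OF assms(2) assms(4)] by blast
qed

end
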